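(* If an irreducible billiard-like interval exchange transformation $f$ of $I=[-1,1)$ satisfies the modified Keane condition, then $f$ is minimal, i.e. every orbit of $f$ is dense in $I$.
   Context: An interval exchange transformation of $I=[-1,1)$: a finite partition $\{I_\alpha\}_{\alpha\in\mathcal{A}}$ of $I$ into intervals closed on the left and open on the right ($|\mathcal{A}|\ge2$), and a bijection $f:I\to I$ whose restriction to each $I_\alpha$ is a translation; let $\pi_0:\mathcal{A}\to\{1,\dots,|\mathcal{A}|\}$ give the order of the intervals $I_\alpha$ in $I$ from left to right, and let $p_\alpha$ be the left endpoint of $I_\alpha$. $f$ is irreducible if for no $k<|\mathcal{A}|$ the union $I_{\pi_0^{-1}(1)}\cup\dots\cup I_{\pi_0^{-1}(k)}$ is invariant under $f$. $f$ is billiard-like if: each $I_\alpha$ is contained in $[-1,0)$ or in $[0,1)$; each $f(I_\alpha)$ is contained in $[-1,0)$ or in $[0,1)$; and each of $[-1,0)$, $[0,1)$ contains at least two intervals of the partition. A billiard-like $f$ satisfies the modified Keane condition if $f^m(p_\alpha)\ne p_\beta$ for all $m\ge1$, all $\alpha\in\mathcal{A}$, and all $\beta\in\mathcal{A}$ with $p_\beta\notin\{-1,0\}$. *)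

theory Defs
  imports "HOL-Analysis.Analysis"
begin

abbreviation IntI :: "real set" where "IntI \<equiv> {-1..<1}"

definition piece :: "('a \<Rightarrow> real) \<Rightarrow> ('a \<Rightarrow> real) \<Rightarrow> 'a \<Rightarrow> real set" where
  "piece p q \<alpha> = {p \<alpha>..<q \<alpha>}"

definition is_iet :: "(real \<Rightarrow> real) \<Rightarrow> ('a::finite \<Rightarrow> real) \<Rightarrow> ('a \<Rightarrow> real) \<Rightarrow> bool" where
  "is_iet f p q \<longleftrightarrow>
     CARD('a) \<ge> 2 \<and>
     (\<forall>\<alpha>. p \<alpha> < q \<alpha>) \<and>
     (\<forall>\<alpha> \<beta>. \<alpha> \<noteq> \<beta> \<longrightarrow> piece p q \<alpha> \<inter> piece p q \<beta> = {}) \<and>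
     (\<Union>\<alpha>. piece p q \<alpha>) = IntI \<and>
     bij_betw f IntI IntI \<and>
     (\<forall>\<alpha>. \<exists>t. \<forall>x\<in>piece p q \<alpha>. f x = x + t)"

text \<open>pi0: position (1..|A|) of the interval of alpha in I, from left to right.\<close>
definition pi0 :: "('a::finite \<Rightarrow> real) \<Rightarrow> 'a \<Rightarrow> nat" where
  "pi0 p \<alpha> = card {\<beta>. p \<beta> \<le> p \<alpha>}"

definition iet_irreducible :: "(real \<Rightarrow> real) \<Rightarrow> ('a::finite \<Rightarrow> real) \<Rightarrow> ('a \<Rightarrow> real) \<Rightarrow> bool" where
  "iet_irreducible f p q \<longleftrightarrow>
     (\<forall>k. 1 \<le> k \<and> k < CARD('a) \<longrightarrow>
        \<not> (f ` (\<Union>\<alpha>\<in>{\<alpha>. pi0 p \<alpha> \<le> k}. piece p q \<alpha>)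
             \<subseteq> (\<Union>\<alpha>\<in>{\<alpha>. pi0 p \<alpha> \<le> k}. piece p q \<alpha>)))"

definition billiard_like :: "(real \<Rightarrow> real) \<Rightarrow> ('a::finite \<Rightarrow> real) \<Rightarrow> ('a \<Rightarrow> real) \<Rightarrow> bool" where
  "billiard_like f p q \<longleftrightarrow>
     (\<forall>\<alpha>. piece p q \<alpha> \<subseteq> {-1..<0} \<or> piece p q \<alpha> \<subseteq> {0..<1}) \<and>
     (\<forall>\<alpha>. f ` piece p q \<alpha> \<subseteq> {-1..<0} \<or> f ` piece p q \<alpha> \<subseteq> {0..<1}) \<and>
     card {\<alpha>. piece p q \<alpha> \<subseteq> {-1..<0}} \<ge> 2 \<and>
     card {\<alpha>. piece p q \<alpha> \<subseteq> {0..<1}} \<ge> 2"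

definition modified_keane :: "(real \<Rightarrow> real) \<Rightarrow> ('a::finite \<Rightarrow> real) \<Rightarrow> bool" where
  "modified_keane f p \<longleftrightarrow>
     (\<forall>m::nat. \<forall>\<alpha> \<beta>. m \<ge> 1 \<and> p \<beta> \<notin> {-1, 0} \<longrightarrow> (f ^^ m) (p \<alpha>) \<noteq> p \<beta>)"

definition minimal_on_I :: "(real \<Rightarrow> real) \<Rightarrow> bool" where
  "minimal_on_I f \<longleftrightarrow> (\<forall>x\<in>IntI. IntI \<subseteq> closure {(f ^^ n) x | n::nat. True})"

end

theory Submission
  imports Defs
begin
definition rloc :: "(real \<Rightarrow> real) \<Rightarrow> real \<Rightarrow> bool" where
  "rloc g y \<longleftrightarrow> (\<exists>\<delta>>0. \<forall>z. y \<le> z \<and> z < y + \<delta> \<longrightarrow> z \<in> IntI \<and> g z = z + (g y - y))"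

definition tloc :: "(real \<Rightarrow> real) \<Rightarrow> real \<Rightarrow> bool" where
  "tloc g y \<longleftrightarrow> (\<exists>\<delta>>0. \<forall>z. y - \<delta> < z \<and> z < y + \<delta> \<longrightarrow> z \<in> IntI \<and> g z = z + (g y - y))"

lemma rlocE:
  assumes "rloc g y"
  obtains d where "d > 0" "\<And>z. y \<le> z \<Longrightarrow> z < y + d \<Longrightarrow> z \<in> IntI \<and> g z = z + (g y - y)"
proof -
  from assms obtain d where "d > 0" "\<forall>z. y \<le> z \<and> z < y + d \<longrightarrow> z \<in> IntI \<and> g z = z + (g y - y)"
    unfolding rloc_def by blast
  then show ?thesis using that by blast
qed

lemma tlocE:
  assumes "tloc g y"
  obtains d where "d > 0" "\<And>z. y - d < z \<Longrightarrow> z < y + d \<Longrightarrow> z \<in> IntI \<and> g z = z + (g y - y)"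
proof -
  from assms obtain d where "d > 0" "\<forall>z. y - d < z \<and> z < y + d \<longrightarrow> z \<in> IntI \<and> g z = z + (g y - y)"
    unfolding tloc_def by blast
  then show ?thesis using that by blast
qed

lemma rlocI:
  assumes "d > 0" "\<And>z. y \<le> z \<Longrightarrow> z < y + d \<Longrightarrow> z \<in> IntI \<and> g z = z + (g y - y)"
  shows "rloc g y"
proof -
  have "\<forall>z. y \<le> z \<and> z < y + d \<longrightarrow> z \<in> IntI \<and> g z = z + (g y - y)" using assms(2) by blast
  then show ?thesis unfolding rloc_def using assms(1) by blast
qed

lemma tlocI:
  assumes "d > 0" "\<And>z. y - d < z \<Longrightarrow> z < y + d \<Longrightarrow> z \<in> IntI \<and> g z = z + (g y - y)"
  shows "tloc g y"
proof -
  have "\<forall>z. y - d < z \<and> z < y + d \<longrightarrow> z \<in> IntI \<and> g z = z + (g y - y)" using assms(2) by blast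
  then show ?thesis unfolding tloc_def using assms(1) by blast
qed

lemma rloc_comp:
  assumes "rloc h y" "rloc g (h y)"
  shows "rloc (\<lambda>x. g (h x)) y"
proof -
  obtain d1 where d1: "d1 > 0" "\<And>z. y \<le> z \<Longrightarrow> z < y + d1 \<Longrightarrow> z \<in> IntI \<and> h z = z + (h y - y)"
    by (fact rlocE[OF assms(1)])
  obtain d2 where d2: "d2 > 0" "\<And>z. h y \<le> z \<Longrightarrow> z < h y + d2 \<Longrightarrow> z \<in> IntI \<and> g z = z + (g (h y) - h y)"
    by (fact rlocE[OF assms(2)])
  show ?thesis
  proof (rule rlocI[of "min d1 d2"])
    show "min d1 d2 > 0" using d1(1) d2(1) by simp
    fix z assume z: "y \<le> z" "z < y + min d1 d2"
    then have z1: "z < y + d1" "z < y + d2" by auto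
    have hz: "z \<in> IntI \<and> h z = z + (h y - y)" using d1(2)[OF z(1) z1(1)] .
    have "h y \<le> h z" "h z < h y + d2" using hz z z1 by auto
    then have "g (h z) = h z + (g (h y) - h y)" using d2(2) by blast
    then show "z \<in> IntI \<and> g (h z) = z + (g (h y) - y)" using hz by simp
  qed
qed

lemma tloc_comp:
  assumes "tloc h y" "tloc g (h y)"
  shows "tloc (\<lambda>x. g (h x)) y"
proof -
  obtain d1 where d1: "d1 > 0" "\<And>z. y - d1 < z \<Longrightarrow> z < y + d1 \<Longrightarrow> z \<in> IntI \<and> h z = z + (h y - y)"
    by (fact tlocE[OF assms(1)])
  obtain d2 where d2: "d2 > 0" "\<And>z. h y - d2 < z \<Longrightarrow> z < h y + d2 \<Longrightarrow> z \<in> IntI \<and> g z = z + (g (h y) - h y)"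
    by (fact tlocE[OF assms(2)])
  show ?thesis
  proof (rule tlocI[of "min d1 d2"])
    show "min d1 d2 > 0" using d1(1) d2(1) by simp
    fix z assume z: "y - min d1 d2 < z" "z < y + min d1 d2"
    then have z1: "y - d1 < z" "z < y + d1" "y - d2 < z" "z < y + d2" by auto
    have hz: "z \<in> IntI \<and> h z = z + (h y - y)" using d1(2)[OF z1(1) z1(2)] .
    have "h y - d2 < h z" "h z < h y + d2" using hz z1 by auto
    then have "g (h z) = h z + (g (h y) - h y)" using d2(2) by blast
    then show "z \<in> IntI \<and> g (h z) = z + (g (h y) - y)" using hz by simp
  qed
qed

lemma subsingleton_finite: "(\<And>x y. x \<in> A \<Longrightarrow> y \<in> A \<Longrightarrow> x = y) \<Longrightarrow> finite A"
proof (cases "A = {}")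
  case False
  then obtain x where "x \<in> A" by auto
  moreover assume "\<And>x y. x \<in> A \<Longrightarrow> y \<in> A \<Longrightarrow> x = y"
  ultimately have "A \<subseteq> {x}" by auto
  then show ?thesis by (rule finite_subset) simp
qed simp

lemma pigeon:
  fixes a :: "nat \<Rightarrow> real"
  assumes bd: "\<And>n. -1 \<le> a n \<and> a n \<le> 1" and dp: "\<delta> > 0"
  shows "\<exists>i j. i < j \<and> \<bar>a j - a i\<bar> < \<delta>"
proof -
  define bx where "bx n = \<lfloor>(a n + 1) / \<delta>\<rfloor>" for n
  have rng: "bx ` UNIV \<subseteq> {0..\<lceil>2 / \<delta>\<rceil>}"
  proof
    fix k assume "k \<in> bx ` UNIV"
    then obtain n where k: "k = bx n" by auto
    have h1: "0 \<le> (a n + 1) / \<delta>" using bd[of n] dp by auto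
    have h2: "(a n + 1) / \<delta> \<le> 2 / \<delta>" using bd[of n] dp by (simp add: divide_right_mono)
    have "0 \<le> bx n" unfolding bx_def using h1 by simp
    moreover have "bx n \<le> \<lfloor>2 / \<delta>\<rfloor>" unfolding bx_def using h2 by (rule floor_mono)
    moreover have "\<lfloor>2 / \<delta>\<rfloor> \<le> \<lceil>2 / \<delta>\<rceil>" by (rule floor_le_ceiling)
    ultimately have "0 \<le> bx n \<and> bx n \<le> \<lceil>2 / \<delta>\<rceil>" by linarith
    then show "k \<in> {0..\<lceil>2 / \<delta>\<rceil>}" using k by simp
  qed
  have "\<not> inj_on bx UNIV"
  proof
    assume "inj_on bx UNIV"
    then have "finite (UNIV :: nat set)" using inj_on_finite[OF _ rng] by auto
    then show False by simp
  qed
  then obtain i j where ij: "i \<noteq> j" "bx i = bx j" unfolding inj_on_def by auto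
  have close: "\<bar>a j - a i\<bar> < \<delta>"
  proof -
    let ?k = "bx i"
    have "of_int ?k \<le> (a i + 1) / \<delta>" "(a i + 1) / \<delta> < of_int ?k + 1"
      unfolding bx_def using floor_correct[of "(a i + 1) / \<delta>"] by simp_all
    moreover have "of_int ?k \<le> (a j + 1) / \<delta>" "(a j + 1) / \<delta> < of_int ?k + 1"
      unfolding ij(2) unfolding bx_def using floor_correct[of "(a j + 1) / \<delta>"] by simp_all
    ultimately have "\<bar>(a j + 1) / \<delta> - (a i + 1) / \<delta>\<bar> < 1" by linarith
    moreover have "(a j + 1) / \<delta> - (a i + 1) / \<delta> = (a j - a i) / \<delta>"
      using dp by (simp add: field_simps)
    ultimately have "\<bar>a j - a i\<bar> / \<delta> < 1" using dp by (simp add: abs_divide)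
    then show ?thesis using dp by (simp add: divide_less_eq)
  qed
  show ?thesis
  proof (cases "i < j")
    case True then show ?thesis using close by auto
  next
    case False then have "j < i" using ij by auto
    then show ?thesis using close by (intro exI[of _ j] exI[of _ i]) auto
  qed
qed

locale gm =
  fixes g :: "real \<Rightarrow> real" and B :: "real set"
  assumes finB: "finite B" and m1B: "-1 \<in> B"
    and inj: "inj_on g IntI" and into: "\<And>y. y \<in> IntI \<Longrightarrow> g y \<in> IntI"
    and rl: "\<And>y. y \<in> IntI \<Longrightarrow> rloc g y"
    and tl: "\<And>y. y \<in> IntI \<Longrightarrow> y \<notin> B \<Longrightarrow> tloc g y"
begin

lemma pow_in: "y \<in> IntI \<Longrightarrow> (g^^n) y \<in> IntI"
proof (induction n)
  case (Suc n) then show ?case using into by simp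
qed simp

lemma pow_inj: "inj_on (g^^n) IntI"
proof (induction n)
  case 0 then show ?case by simp
next
  case (Suc n)
  have "inj_on (g \<circ> (g^^n)) IntI"
  proof (rule comp_inj_on[OF Suc.IH])
    show "inj_on g ((g ^^ n) ` IntI)" using inj pow_in by (meson image_subset_iff inj_on_subset)
  qed
  then show ?case by (simp add: o_def)
qed

lemma pow_eq: "x \<in> IntI \<Longrightarrow> y \<in> IntI \<Longrightarrow> (g^^n) x = (g^^n) y \<Longrightarrow> x = y"
  using pow_inj[of n] unfolding inj_on_def by blast

lemma pow_rloc: "y \<in> IntI \<Longrightarrow> rloc (g^^n) y"
proof (induction n)
  case 0
  show ?case
  proof (rule rlocI[of "1 - y"])
    show "0 < 1 - y" using 0 by simp
    fix z assume "y \<le> z" "z < y + (1 - y)"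
    then show "z \<in> IntI \<and> (g ^^ 0) z = z + ((g ^^ 0) y - y)" using 0 by simp
  qed
next
  case (Suc n)
  have "rloc (\<lambda>x. g ((g^^n) x)) y"
    using rloc_comp[OF Suc.IH[OF Suc.prems] rl[OF pow_in[OF Suc.prems]]] .
  moreover have "(\<lambda>x. g ((g^^n) x)) = g^^Suc n" by auto
  ultimately show ?case by simp
qed

lemma pow_tloc: "y \<in> IntI \<Longrightarrow> y \<notin> B \<Longrightarrow> (\<forall>j<n. (g^^j) y \<notin> B) \<Longrightarrow> tloc (g^^n) y"
proof (induction n)
  case 0
  have "y \<noteq> -1" using 0 m1B by auto
  then have y: "-1 < y" "y < 1" using 0 by auto
  show ?case
  proof (rule tlocI[of "min (y + 1) (1 - y)"])
    show "0 < min (y + 1) (1 - y)" using y by simp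
    fix z assume "y - min (y + 1) (1 - y) < z" "z < y + min (y + 1) (1 - y)"
    then show "z \<in> IntI \<and> (g ^^ 0) z = z + ((g ^^ 0) y - y)" by (simp add: min_def split: if_splits)
  qed
next
  case (Suc n)
  have "tloc (\<lambda>x. g ((g^^n) x)) y"
    using tloc_comp[OF Suc.IH[OF Suc.prems(1,2)] tl[OF pow_in[OF Suc.prems(1)]]] Suc.prems(3) by simp
  moreover have "(\<lambda>x. g ((g^^n) x)) = g^^Suc n" by auto
  ultimately show ?case by simp
qed

lemma trans_nobreak:
  assumes u: "u \<in> IntI" and dp: "0 < \<delta>" and ub: "u + \<delta> \<le> 1"
    and nb: "\<forall>e\<in>B. \<not> (u < e \<and> e < u + \<delta>)"
    and z0: "u \<le> z0" "z0 < u + \<delta>"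
  shows "g z0 = z0 + (g u - u)"
proof (rule ccontr)
  assume bad0: "g z0 \<noteq> z0 + (g u - u)"
  define X where "X = {z. u \<le> z \<and> z < u + \<delta> \<and> g z \<noteq> z + (g u - u)}"
  have z0X: "z0 \<in> X" using z0 bad0 X_def by simp
  have bdd: "bdd_below X" unfolding X_def by (rule bdd_belowI[of _ u]) simp
  define m where "m = Inf X"
  obtain d1 where d1: "d1 > 0" "\<And>z. u \<le> z \<Longrightarrow> z < u + d1 \<Longrightarrow> z \<in> IntI \<and> g z = z + (g u - u)"
    by (fact rlocE[OF rl[OF u]])
  have lowX: "\<And>z. z \<in> X \<Longrightarrow> u + d1 \<le> z"
  proof -
    fix z assume zX: "z \<in> X"
    show "u + d1 \<le> z"
    proof (rule ccontr)
      assume "\<not> u + d1 \<le> z"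
      then have "g z = z + (g u - u)" using d1(2)[of z] zX X_def by auto
      then show False using zX X_def by auto
    qed
  qed
  have m1: "u + d1 \<le> m" unfolding m_def using z0X lowX by (intro cInf_greatest) auto
  have m2: "m \<le> z0" unfolding m_def using z0X bdd by (rule cInf_lower)
  have mI: "m \<in> IntI" using m1 m2 z0 ub u d1(1) by auto
  have mB: "m \<notin> B" using nb m1 m2 z0 d1(1) by auto
  obtain d2 where d2: "d2 > 0" "\<And>z. m - d2 < z \<Longrightarrow> z < m + d2 \<Longrightarrow> z \<in> IntI \<and> g z = z + (g m - m)"
    by (fact tlocE[OF tl[OF mI mB]])
  define z1 where "z1 = max u (m - d2 / 2)"
  have z1a: "u \<le> z1" "z1 < m" "m - d2 < z1" using z1_def m1 d1(1) d2(1) by auto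
  have "z1 \<notin> X"
  proof
    assume "z1 \<in> X"
    then have "m \<le> z1" unfolding m_def using bdd by (rule cInf_lower)
    then show False using z1a by simp
  qed
  moreover have "z1 < u + \<delta>" using z1a m2 z0 by simp
  ultimately have e1: "g z1 = z1 + (g u - u)" using z1a X_def by auto
  have e2: "g z1 = z1 + (g m - m)" using d2(2)[of z1] z1a by auto
  have sh: "g m - m = g u - u" using e1 e2 by simp
  have "m + d2 \<le> m" unfolding m_def
  proof (rule cInf_greatest)
    show "X \<noteq> {}" using z0X by auto
    fix z assume zX: "z \<in> X"
    have "m \<le> z" unfolding m_def using zX bdd by (rule cInf_lower)
    show "Inf X + d2 \<le> z"
    proof (rule ccontr)
      assume "\<not> Inf X + d2 \<le> z"
      then have "z < m + d2" using m_def by simp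
      then have "g z = z + (g m - m)" using d2(2)[of z] \<open>m \<le> z\<close> d2(1) by auto
      then show False using zX X_def sh by auto
    qed
  qed
  then show False using d2(1) by simp
qed

end

context gm
begin

definition cut :: "real \<Rightarrow> real \<Rightarrow> real set" where
  "cut c d = {z. c \<le> z \<and> z < d \<and> (\<exists>k. (g^^k) z \<in> B \<union> {c, d} \<and> (\<forall>j. 1 \<le> j \<and> j < k \<longrightarrow> (g^^j) z \<notin> {c..<d}))}"

lemma finite_cut:
  assumes cd: "-1 \<le> c" "d \<le> 1"
  shows "finite (cut c d)"
proof -
  define S where "S e = {z. c \<le> z \<and> z < d \<and> (\<exists>k\<ge>1. (g^^k) z = e \<and> (\<forall>j. 1 \<le> j \<and> j < k \<longrightarrow> (g^^j) z \<notin> {c..<d}))}" for e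
  have sub: "cut c d \<subseteq> (B \<union> {c, d}) \<union> (\<Union>e\<in>B \<union> {c, d}. S e)"
  proof
    fix z assume "z \<in> cut c d"
    then obtain k where z: "c \<le> z" "z < d" "(g^^k) z \<in> B \<union> {c, d}" "\<forall>j. 1 \<le> j \<and> j < k \<longrightarrow> (g^^j) z \<notin> {c..<d}"
      unfolding cut_def by blast
    show "z \<in> (B \<union> {c, d}) \<union> (\<Union>e\<in>B \<union> {c, d}. S e)"
    proof (cases "k = 0")
      case True then show ?thesis using z by auto
    next
      case False
      then have "k \<ge> 1" by simp
      then have "z \<in> S ((g^^k) z)" unfolding S_def using z(1,2,4) by blast
      then show ?thesis using z(3) by blast
    qed
  qed
  have key: "x = y" if k0: "1 \<le> k" and k: "(g^^k) x = e" and k': "1 \<le> k'" "(g^^k') y = e" "\<forall>j. 1 \<le> j \<and> j < k' \<longrightarrow> (g^^j) y \<notin> {c..<d}"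
     and kle: "k \<le> k'" and xI: "x \<in> {c..<d}" and yI: "y \<in> IntI" for x y k k' e
  proof -
    have xI': "x \<in> IntI" using xI cd by auto
    show "x = y"
    proof (cases "k = k'")
      case True then show ?thesis using k k'(2) pow_eq xI' yI by metis
    next
      case False
      then have lt: "k < k'" using kle by simp
      have "(g^^k') y = (g^^k) ((g^^(k' - k)) y)"
        using lt by (metis funpow_add le_add_diff_inverse less_imp_le_nat o_apply)
      then have "(g^^k) x = (g^^k) ((g^^(k' - k)) y)" using k k'(2) by simp
      then have "x = (g^^(k' - k)) y" using pow_eq xI' pow_in yI by blast
      moreover have "1 \<le> k' - k" "k' - k < k'" using lt k0 by auto
      then have "(g^^(k' - k)) y \<notin> {c..<d}" using k'(3) by blast
      ultimately show ?thesis using xI by auto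
    qed
  qed
  have fS: "finite (S e)" for e
  proof (rule subsingleton_finite)
    fix x y assume x: "x \<in> S e" and y: "y \<in> S e"
    obtain k where k: "k \<ge> 1" "(g^^k) x = e" "\<forall>j. 1 \<le> j \<and> j < k \<longrightarrow> (g^^j) x \<notin> {c..<d}"
      using x unfolding S_def by blast
    obtain k' where k': "k' \<ge> 1" "(g^^k') y = e" "\<forall>j. 1 \<le> j \<and> j < k' \<longrightarrow> (g^^j) y \<notin> {c..<d}"
      using y unfolding S_def by blast
    have xJ: "x \<in> {c..<d}" "y \<in> {c..<d}" using x y unfolding S_def by auto
    have xI: "x \<in> IntI" "y \<in> IntI" using xJ cd by auto
    show "x = y"
    proof (cases "k \<le> k'")
      case True show ?thesis by (rule key[OF k(1) k(2) k' True xJ(1) xI(2)])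
    next
      case False then have "k' \<le> k" by simp
      then show ?thesis using key[OF k'(1) k'(2) k \<open>k' \<le> k\<close> xJ(2) xI(1)] by simp
    qed
  qed
  have "finite ((B \<union> {c, d}) \<union> (\<Union>e\<in>B \<union> {c, d}. S e))" using finB fS by auto
  then show ?thesis using sub finite_subset by blast
qed

end

context gm
begin

context
  fixes c d y \<delta> :: real
  assumes cd: "-1 \<le> c" "c < d" "d \<le> 1" and yd: "c \<le> y" "y + \<delta> \<le> d" "0 < \<delta>"
    and nocut: "\<And>z. z \<in> cut c d \<Longrightarrow> \<not> (y < z \<and> z < y + \<delta>)"
begin

lemma cell_I: "y \<le> z \<Longrightarrow> z < y + \<delta> \<Longrightarrow> z \<in> IntI"
  using cd yd by auto

lemma step_tr:
  assumes tk: "\<forall>z. y \<le> z \<and> z < y + \<delta> \<longrightarrow> (g^^k) z = z + ((g^^k) y - y)"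
    and avs: "\<forall>j. 1 \<le> j \<and> j \<le> k \<longrightarrow> (\<forall>z. y \<le> z \<and> z < y + \<delta> \<longrightarrow> (g^^j) z \<notin> {c..<d})"
  shows "\<forall>z. y \<le> z \<and> z < y + \<delta> \<longrightarrow> (g^^Suc k) z = z + ((g^^Suc k) y - y)"
proof -
  define u where "u = (g^^k) y"
  have tk': "(g^^k) z = z + (u - y)" if "y \<le> z" "z < y + \<delta>" for z
    using tk that unfolding u_def by blast
  have imgI: "z + (u - y) \<in> IntI" if "y \<le> z" "z < y + \<delta>" for z
  proof -
    have "(g^^k) z \<in> IntI" using pow_in[OF cell_I[OF that]] .
    moreover have "(g^^k) z = z + (u - y)" using tk that unfolding u_def by blast
    ultimately show ?thesis by simp
  qed
  have uI: "u \<in> IntI" using imgI[of y] yd by simp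
  have ub: "u + \<delta> \<le> 1"
  proof (rule ccontr)
    assume "\<not> u + \<delta> \<le> 1"
    then have "y \<le> y + (1 - u)" "y + (1-u) < y + \<delta>" using uI by auto
    then have "y + (1-u) + (u - y) \<in> IntI" using imgI by blast
    then show False by simp
  qed
  have nb: "\<forall>e\<in>B. \<not> (u < e \<and> e < u + \<delta>)"
  proof (intro ballI notI)
    fix e assume eB: "e \<in> B" and e: "u < e \<and> e < u + \<delta>"
    define z where "z = y + (e - u)"
    have z1: "y < z" "z < y + \<delta>" using e z_def by auto
    have gz: "(g^^k) z = e" using tk'[of z] z1 z_def by simp
    have "z \<in> cut c d" unfolding cut_def
    proof (intro CollectI conjI exI[of _ k])
      show "c \<le> z" "z < d" using z1 yd by auto
      show "(g^^k) z \<in> B \<union> {c,d}" using gz eB by simp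
      show "\<forall>j. 1 \<le> j \<and> j < k \<longrightarrow> (g^^j) z \<notin> {c..<d}" using avs z1 by auto
    qed
    then show False using nocut z1 by blast
  qed
  show ?thesis
  proof (intro allI impI)
    fix z assume z: "y \<le> z \<and> z < y + \<delta>"
    have e1: "(g^^k) z = z + (u - y)" using tk'[of z] z by simp
    have e2: "g (z + (u - y)) = z + (u - y) + (g u - u)"
      by (rule trans_nobreak[OF uI yd(3) ub nb]) (use z in auto)
    have "(g^^Suc k) z = g ((g^^k) z)" "(g^^Suc k) y = g u" using u_def by simp_all
    then show "(g^^Suc k) z = z + ((g^^Suc k) y - y)" using e1 e2 by simp
  qed
qed

lemma step_av:
  assumes tk: "\<forall>z. y \<le> z \<and> z < y + \<delta> \<longrightarrow> (g^^k) z = z + ((g^^k) y - y)"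
    and k1: "1 \<le> k"
    and avs: "\<forall>j. 1 \<le> j \<and> j < k \<longrightarrow> (\<forall>z. y \<le> z \<and> z < y + \<delta> \<longrightarrow> (g^^j) z \<notin> {c..<d})"
    and out: "(g^^k) y \<notin> {c..<d}"
  shows "\<forall>z. y \<le> z \<and> z < y + \<delta> \<longrightarrow> (g^^k) z \<notin> {c..<d}"
proof (intro allI impI notI)
  fix z assume z: "y \<le> z \<and> z < y + \<delta>" and inJ: "(g^^k) z \<in> {c..<d}"
  define u where "u = (g^^k) y"
  have tk': "(g^^k) w = w + (u - y)" if "y \<le> w" "w < y + \<delta>" for w
    using tk that unfolding u_def by blast
  have gz: "(g^^k) z = z + (u - y)" using tk'[of z] z by simp
  have uo: "u \<notin> {c..<d}" using out u_def by simp
  have "u < c" using uo inJ gz z by auto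
  define z' where "z' = y + (c - u)"
  have z'1: "y < z'" "z' < y + \<delta>" using z'_def \<open>u < c\<close> inJ gz z by auto
  have gz': "(g^^k) z' = c" using tk'[of z'] z'1 z'_def by simp
  have "z' \<in> cut c d" unfolding cut_def
  proof (intro CollectI conjI exI[of _ k])
    show "c \<le> z'" "z' < d" using z'1 yd by auto
    show "(g^^k) z' \<in> B \<union> {c,d}" using gz' by simp
    show "\<forall>j. 1 \<le> j \<and> j < k \<longrightarrow> (g^^j) z' \<notin> {c..<d}" using avs z'1 by auto
  qed
  then show False using nocut z'1 by blast
qed

lemma img_in:
  assumes tk: "\<forall>z. y \<le> z \<and> z < y + \<delta> \<longrightarrow> (g^^k) z = z + ((g^^k) y - y)"
    and avs: "\<forall>j. 1 \<le> j \<and> j < k \<longrightarrow> (\<forall>z. y \<le> z \<and> z < y + \<delta> \<longrightarrow> (g^^j) z \<notin> {c..<d})"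
    and inn: "(g^^k) y \<in> {c..<d}"
  shows "(g^^k) y + \<delta> \<le> d"
proof (rule ccontr)
  assume "\<not> (g^^k) y + \<delta> \<le> d"
  define u where "u = (g^^k) y"
  have tk': "(g^^k) w = w + (u - y)" if "y \<le> w" "w < y + \<delta>" for w
    using tk that unfolding u_def by blast
  have uu: "\<not> u + \<delta> \<le> d" "u < d" using \<open>\<not> (g^^k) y + \<delta> \<le> d\<close> inn u_def by auto
  define z' where "z' = y + (d - u)"
  have z'1: "y < z'" "z' < y + \<delta>" using z'_def uu by auto
  have gz': "(g^^k) z' = d" using tk'[of z'] z'1 z'_def by simp
  have "z' \<in> cut c d" unfolding cut_def
  proof (intro CollectI conjI exI[of _ k])
    show "c \<le> z'" "z' < d" using z'1 yd by auto
    show "(g^^k) z' \<in> B \<union> {c,d}" using gz' by simp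
    show "\<forall>j. 1 \<le> j \<and> j < k \<longrightarrow> (g^^j) z' \<notin> {c..<d}" using avs z'1 by auto
  qed
  then show False using nocut z'1 by blast
qed

lemma core:
  "(\<forall>j. 1 \<le> j \<and> j \<le> k \<longrightarrow> (g^^j) y \<notin> {c..<d}) \<Longrightarrow>
    (\<forall>z. y \<le> z \<and> z < y + \<delta> \<longrightarrow> (g^^k) z = z + ((g^^k) y - y)) \<and>
    (\<forall>j. 1 \<le> j \<and> j \<le> k \<longrightarrow> (\<forall>z. y \<le> z \<and> z < y + \<delta> \<longrightarrow> (g^^j) z \<notin> {c..<d}))"
proof (induction k)
  case 0 then show ?case by simp
next
  case (Suc k)
  have pre: "\<forall>j. 1 \<le> j \<and> j \<le> k \<longrightarrow> (g^^j) y \<notin> {c..<d}"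
    using Suc.prems by auto
  note IHc = Suc.IH[OF pre]
  note IH = conjunct1[OF IHc] conjunct2[OF IHc]
  have T: "\<forall>z. y \<le> z \<and> z < y + \<delta> \<longrightarrow> (g^^Suc k) z = z + ((g^^Suc k) y - y)"
    by (rule step_tr[OF IH(1) IH(2)])
  have A: "\<forall>z. y \<le> z \<and> z < y + \<delta> \<longrightarrow> (g^^Suc k) z \<notin> {c..<d}"
  proof (rule step_av[OF T])
    show "1 \<le> Suc k" by simp
    show "\<forall>j. 1 \<le> j \<and> j < Suc k \<longrightarrow> (\<forall>z. y \<le> z \<and> z < y + \<delta> \<longrightarrow> (g^^j) z \<notin> {c..<d})"
      using IH(2) by auto
    show "(g^^Suc k) y \<notin> {c..<d}" using Suc.prems by auto
  qed
  have "\<forall>j. 1 \<le> j \<and> j \<le> Suc k \<longrightarrow> (\<forall>z. y \<le> z \<and> z < y + \<delta> \<longrightarrow> (g^^j) z \<notin> {c..<d})"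
  proof (intro allI impI)
    fix j z assume j: "1 \<le> j \<and> j \<le> Suc k" and z: "y \<le> z \<and> z < y + \<delta>"
    show "(g^^j) z \<notin> {c..<d}"
    proof (cases "j = Suc k")
      case True then show ?thesis using A z by simp
    next
      case False then show ?thesis using IH(2) j z by simp
    qed
  qed
  then show ?case using T by (rule conjI[rotated])
qed

lemma full:
  assumes r1: "1 \<le> r" and nr: "\<forall>j. 1 \<le> j \<and> j < r \<longrightarrow> (g^^j) y \<notin> {c..<d}"
    and rin: "(g^^r) y \<in> {c..<d}"
  shows "\<forall>z. y \<le> z \<and> z < y + \<delta> \<longrightarrow> (g^^r) z = z + ((g^^r) y - y) \<and> (g^^r) z \<in> {c..<d}"
proof -
  obtain r' where r': "r = Suc r'" using r1 by (cases r) auto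
  have pre: "\<forall>j. 1 \<le> j \<and> j \<le> r' \<longrightarrow> (g^^j) y \<notin> {c..<d}" using nr r' by auto
  note C = core[OF pre]
  have T: "\<forall>z. y \<le> z \<and> z < y + \<delta> \<longrightarrow> (g^^r) z = z + ((g^^r) y - y)"
    unfolding r' by (rule step_tr[OF conjunct1[OF C] conjunct2[OF C]])
  have avs: "\<forall>j. 1 \<le> j \<and> j < r \<longrightarrow> (\<forall>z. y \<le> z \<and> z < y + \<delta> \<longrightarrow> (g^^j) z \<notin> {c..<d})"
    using conjunct2[OF C] r' by auto
  have ub: "(g^^r) y + \<delta> \<le> d" by (rule img_in[OF T avs rin])
  show ?thesis
  proof (intro allI impI conjI)
    fix z assume z: "y \<le> z \<and> z < y + \<delta>"
    show e: "(g^^r) z = z + ((g^^r) y - y)" using T z by blast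
    show "(g^^r) z \<in> {c..<d}" unfolding e using ub rin z by auto
  qed
qed

end

lemma first_return:
  assumes cd: "-1 \<le> c" "c < d" "d \<le> 1" and y: "c \<le> y" "y < d"
  shows "\<exists>n\<ge>1. (g^^n) y \<in> {c..<d}"
proof (rule ccontr)
  assume nr: "\<not> (\<exists>n\<ge>1. (g^^n) y \<in> {c..<d})"
  define D where "D = insert (d - y) ((\<lambda>z. z - y) ` {z \<in> cut c d. y < z})"
  have fD: "finite D" using finite_cut[OF cd(1,3)] D_def by auto
  have posD: "\<forall>x\<in>D. 0 < x" using D_def y by auto
  define \<delta> where "\<delta> = Min D"
  have dp: "0 < \<delta>" using fD posD D_def \<delta>_def by (simp add: Min_gr_iff)
  have "\<delta> \<le> d - y" unfolding \<delta>_def using fD D_def by (intro Min_le) auto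
  then have dd: "y + \<delta> \<le> d" by simp
  have nc: "\<not> (y < z \<and> z < y + \<delta>)" if "z \<in> cut c d" for z
  proof
    assume a: "y < z \<and> z < y + \<delta>"
    then have "z - y \<in> D" using that D_def by auto
    then have "\<delta> \<le> z - y" using fD \<delta>_def by simp
    then show False using a by simp
  qed
  have Ck: "(\<forall>z. y \<le> z \<and> z < y + \<delta> \<longrightarrow> (g^^k) z = z + ((g^^k) y - y)) \<and>
    (\<forall>j. 1 \<le> j \<and> j \<le> k \<longrightarrow> (\<forall>z. y \<le> z \<and> z < y + \<delta> \<longrightarrow> (g^^j) z \<notin> {c..<d}))" for k
  proof -
    have pre: "\<forall>j. 1 \<le> j \<and> j \<le> k \<longrightarrow> (g^^j) y \<notin> {c..<d}" using nr by auto
    show ?thesis by (rule core[OF cd y(1) dd dp nc pre])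
  qed
  have Tk: "(g^^k) z = z + ((g^^k) y - y)" if "y \<le> z" "z < y + \<delta>" for k z
    using conjunct1[OF Ck[of k]] that by blast
  have Ak: "(g^^j) z \<notin> {c..<d}" if "1 \<le> j" "y \<le> z" "z < y + \<delta>" for j z
    using conjunct2[OF Ck[of j]] that by blast
  define a where "a k = (g^^Suc k) y" for k
  have abd: "-1 \<le> a k \<and> a k \<le> 1" for k
    using pow_in[of y "Suc k"] cd y a_def by auto
  obtain i j where ij: "i < j" "\<bar>a j - a i\<bar> < \<delta>" using pigeon[OF abd dp] by blast
  define w where "w = max (a i) (a j)"
  define z1 where "z1 = y + (w - a i)"
  define z2 where "z2 = y + (w - a j)"
  have z1r: "y \<le> z1" "z1 < y + \<delta>" using z1_def w_def ij by auto
  have z2r: "y \<le> z2" "z2 < y + \<delta>" using z2_def w_def ij by auto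
  have "(g^^Suc i) z1 = z1 + (a i - y)" using Tk[OF z1r] unfolding a_def .
  then have g1: "(g^^Suc i) z1 = w" using z1_def by simp
  have "(g^^Suc j) z2 = z2 + (a j - y)" using Tk[OF z2r] unfolding a_def .
  then have g2: "(g^^Suc j) z2 = w" using z2_def by simp
  have sp: "(g^^Suc j) z2 = (g^^Suc i) ((g^^(j - i)) z2)"
    using ij(1) by (metis Suc_diff_Suc diff_Suc_Suc funpow_add le_add_diff_inverse less_imp_le_nat o_apply Suc_le_mono)
  have z2I: "z2 \<in> IntI" using z2r cd y dd by auto
  have z1I: "z1 \<in> IntI" using z1r cd y dd by auto
  have "z1 = (g^^(j - i)) z2"
    using pow_eq[OF z1I pow_in[OF z2I]] g1 g2 sp by metis
  moreover have "(g^^(j - i)) z2 \<notin> {c..<d}" using Ak[of "j - i"] ij(1) z2r by simp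
  moreover have "z1 \<in> {c..<d}" using z1r y dd by auto
  ultimately show False by simp
qed

end

locale gm2 = G: gm g B + H: gm h C for g B h C +
  assumes gh: "\<And>y. y \<in> IntI \<Longrightarrow> g (h y) = y"
begin

lemma gh_pow: "y \<in> IntI \<Longrightarrow> (g^^n) ((h^^n) y) = y"
proof (induction n arbitrary: y)
  case 0 show ?case by simp
next
  case (Suc n)
  have e: "(g^^Suc n) x = (g^^n) (g x)" for x by (simp only: funpow_Suc_right o_apply)
  have "(h^^Suc n) y = h ((h^^n) y)" by simp
  moreover have "g (h ((h^^n) y)) = (h^^n) y" using gh[OF H.pow_in[OF Suc.prems]] .
  ultimately show ?case using e Suc.IH[OF Suc.prems] by simp
qed

lemma back_N:
  assumes cd: "-1 \<le> c" "c < d" "d \<le> 1" and w: "c \<le> w" "w < d"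
  shows "\<exists>s v. N \<le> s \<and> c \<le> v \<and> v < d \<and> (g^^s) v = w"
proof (induction N)
  case 0 show ?case using w by (intro exI[of _ 0] exI[of _ w]) simp
next
  case (Suc N)
  then obtain s v where sv: "N \<le> s" "c \<le> v" "v < d" "(g^^s) v = w" by blast
  obtain t where t: "t \<ge> 1" "(h^^t) v \<in> {c..<d}" using H.first_return[OF cd sv(2,3)] by blast
  have vI: "v \<in> IntI" using sv cd by auto
  have "(g^^t) ((h^^t) v) = v" using gh_pow[OF vI] .
  then have "(g^^(s + t)) ((h^^t) v) = w" using sv(4) by (simp add: funpow_add)
  then show ?case using t sv(1) by (intro exI[of _ "s + t"] exI[of _ "(h^^t) v"]) auto
qed

definition W :: "real \<Rightarrow> real \<Rightarrow> real set" where
  "W c d = {y \<in> IntI. \<exists>n. (g^^n) y \<in> {c..<d}}"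

lemma W_inv:
  assumes cd: "-1 \<le> c" "c < d" "d \<le> 1" and y: "y \<in> IntI"
  shows "y \<in> W c d \<longleftrightarrow> g y \<in> W c d"
proof
  assume "g y \<in> W c d"
  then obtain n where "(g^^n) (g y) \<in> {c..<d}" unfolding W_def by blast
  then have "(g^^Suc n) y \<in> {c..<d}" by (simp only: funpow_Suc_right o_apply)
  then show "y \<in> W c d" using y unfolding W_def by blast
next
  assume "y \<in> W c d"
  then obtain n where n: "(g^^n) y \<in> {c..<d}" unfolding W_def by blast
  have gyI: "g y \<in> IntI" using G.into[OF y] .
  show "g y \<in> W c d"
  proof (cases n)
    case (Suc n')
    then have "(g^^n') (g y) \<in> {c..<d}" using n by (simp only: funpow_Suc_right o_apply)
    then show ?thesis using gyI unfolding W_def by blast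
  next
    case 0
    then have "c \<le> y" "y < d" using n by auto
    then obtain r where r: "r \<ge> 1" "(g^^r) y \<in> {c..<d}" using G.first_return[OF cd] by blast
    then obtain r' where "r = Suc r'" by (cases r) auto
    then have "(g^^r') (g y) \<in> {c..<d}" using r by (simp only: funpow_Suc_right o_apply)
    then show ?thesis using gyI unfolding W_def by blast
  qed
qed

lemma W_back:
  assumes cd: "-1 \<le> c" "c < d" "d \<le> 1" and y: "y \<in> W c d"
  shows "\<exists>m v. c \<le> v \<and> v < d \<and> (g^^m) v = y \<and> (\<forall>i. 1 \<le> i \<and> i \<le> m \<longrightarrow> (g^^i) v \<notin> {c..<d})"
proof -
  obtain n where n: "(g^^n) y \<in> {c..<d}" and yI: "y \<in> IntI" using y unfolding W_def by blast
  obtain s v where sv: "n \<le> s" "c \<le> v" "v < d" "(g^^s) v = (g^^n) y"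
    using back_N[OF cd, of "(g^^n) y" n] n by auto
  have vI: "v \<in> IntI" using sv cd by auto
  have "(g^^s) v = (g^^n) ((g^^(s - n)) v)"
    using sv(1) by (metis funpow_add le_add_diff_inverse o_apply)
  then have "(g^^(s - n)) v = y" using G.pow_eq[OF G.pow_in[OF vI] yI] sv(4) by metis
  then have ex: "\<exists>m v. c \<le> v \<and> v < d \<and> (g^^m) v = y" using sv by blast
  define Q where "Q m \<longleftrightarrow> (\<exists>v. c \<le> v \<and> v < d \<and> (g^^m) v = y)" for m
  define m where "m = (LEAST m. Q m)"
  have Qm: "Q m" unfolding m_def using ex Q_def by (metis LeastI)
  then obtain v0 where v0: "c \<le> v0" "v0 < d" "(g^^m) v0 = y" unfolding Q_def by blast
  have "\<forall>i. 1 \<le> i \<and> i \<le> m \<longrightarrow> (g^^i) v0 \<notin> {c..<d}"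
  proof (intro allI impI notI)
    fix i assume i: "1 \<le> i \<and> i \<le> m" and inJ: "(g^^i) v0 \<in> {c..<d}"
    have "(g^^m) v0 = (g^^(m - i)) ((g^^i) v0)"
      using i by (metis funpow_add le_add_diff_inverse2 o_apply)
    then have "Q (m - i)" unfolding Q_def using inJ v0(3) by auto
    then have "m \<le> m - i" unfolding m_def by (rule Least_le)
    then show False using i by arith
  qed
  then show ?thesis using v0 by blast
qed

end

lemma allimpD: "\<forall>z. P z \<longrightarrow> Q z \<Longrightarrow> P x \<Longrightarrow> Q x" by blast

context gm2
begin

lemma W_repr:
  assumes cd: "-1 \<le> c" "c < d" "d \<le> 1"
  shows "\<exists>F. finite F \<and> W c d = (\<Union>p\<in>F. {fst p..<snd p})"
proof -
  define A0 where "A0 = insert c (G.cut c d)"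
  have fC: "finite (G.cut c d)" using G.finite_cut[OF cd(1,3)] .
  have fA0: "finite A0" using fC A0_def by simp
  have A0J: "c \<le> a" "a < d" if "a \<in> A0" for a using that cd unfolding A0_def G.cut_def by auto
  define N where "N a = insert d {z \<in> G.cut c d. a < z}" for a
  define nx where "nx a = Min (N a)" for a
  have fN: "finite (N a)" "N a \<noteq> {}" for a using fC N_def by auto
  have nx1: "a < nx a" if "a \<in> A0" for a
    unfolding nx_def using fN[of a] A0J[OF that] N_def by (simp add: Min_gr_iff)
  have nx2: "nx a \<le> d" for a unfolding nx_def using fN[of a] N_def by (intro Min_le) auto
  have nx3: "nx a \<le> z" if "z \<in> G.cut c d" "a < z" for a z
    unfolding nx_def using fN[of a] N_def that by (intro Min_le) auto
  have noc: "\<not> (a < z \<and> z < a + (nx a - a))" if "z \<in> G.cut c d" for a z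
    using nx3[of z a] that by force
  have yd: "c \<le> a" "a + (nx a - a) \<le> d" "0 < nx a - a" if "a \<in> A0" for a
    using A0J[OF that] nx1[OF that] nx2[of a] by auto
  define r where "r a = (LEAST n. 1 \<le> n \<and> (g^^n) a \<in> {c..<d})" for a
  have rex: "\<exists>n. 1 \<le> n \<and> (g^^n) a \<in> {c..<d}" if "a \<in> A0" for a
    using G.first_return[OF cd A0J[OF that]] by blast
  have r1: "1 \<le> r a" "(g^^(r a)) a \<in> {c..<d}" if "a \<in> A0" for a
    using LeastI_ex[OF rex[OF that]] unfolding r_def by auto
  have r2: "(g^^j) a \<notin> {c..<d}" if "a \<in> A0" "1 \<le> j" "j < r a" for a j
    using not_less_Least[of j "\<lambda>n. 1 \<le> n \<and> (g^^n) a \<in> {c..<d}"] that unfolding r_def by auto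
  have cellfull: "\<forall>z. a \<le> z \<and> z < a + (nx a - a) \<longrightarrow> (g^^(r a)) z = z + ((g^^(r a)) a - a) \<and> (g^^(r a)) z \<in> {c..<d}"
    if aA: "a \<in> A0" for a
  proof (rule G.full[OF cd yd[OF aA] noc r1(1)[OF aA] _ r1(2)[OF aA]])
    show "\<forall>j. 1 \<le> j \<and> j < r a \<longrightarrow> (g^^j) a \<notin> {c..<d}" using r2[OF aA] by blast
  qed
  have celltr: "(g^^k) z = z + ((g^^k) a - a)" if aA: "a \<in> A0" and k: "k < r a" and z: "a \<le> z" "z < nx a" for a k z
  proof -
    have pre: "\<forall>j. 1 \<le> j \<and> j \<le> k \<longrightarrow> (g^^j) a \<notin> {c..<d}" using r2[OF aA] k by auto
    have "\<forall>z. a \<le> z \<and> z < a + (nx a - a) \<longrightarrow> (g^^k) z = z + ((g^^k) a - a)"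
      using conjunct1[OF G.core[OF cd yd[OF aA] noc pre]] .
    from allimpD[OF this, of z] show ?thesis using z by simp
  qed
  define Sg where "Sg = Sigma A0 (\<lambda>a. {..<r a})"
  define F where "F = (\<lambda>(a,k). ((g^^k) a, (g^^k) a + (nx a - a))) ` Sg"
  have fF: "finite F" unfolding F_def Sg_def using fA0 by auto
  have sub1: "W c d \<subseteq> (\<Union>p\<in>F. {fst p..<snd p})"
  proof
    fix y assume yW: "y \<in> W c d"
    obtain m v where mv: "c \<le> v" "v < d" "(g^^m) v = y" "\<forall>i. 1 \<le> i \<and> i \<le> m \<longrightarrow> (g^^i) v \<notin> {c..<d}"
      using W_back[OF cd yW] by blast
    define L where "L = {x \<in> A0. x \<le> v}"
    have fL: "finite L" "L \<noteq> {}" using fA0 L_def A0_def mv(1) by auto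
    define a where "a = Max L"
    have aA: "a \<in> A0" and av: "a \<le> v" using Max_in[OF fL] unfolding a_def L_def by auto
    have vnx: "v < nx a"
    proof -
      have "\<forall>x\<in>N a. v < x"
      proof
        fix x assume "x \<in> N a"
        then have "x = d \<or> (x \<in> G.cut c d \<and> a < x)" unfolding N_def by auto
        then show "v < x"
        proof
          assume "x = d" then show ?thesis using mv by simp
        next
          assume xc: "x \<in> G.cut c d \<and> a < x"
          show "v < x"
          proof (rule ccontr)
            assume "\<not> v < x"
            then have "x \<in> L" using xc L_def A0_def by auto
            then have "x \<le> a" unfolding a_def using fL by simp
            then show False using xc by simp
          qed
        qed
      qed
      then show ?thesis unfolding nx_def using fN[of a] by (simp add: Min_gr_iff)
    qed
    have mr: "m < r a"
    proof (rule ccontr)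
      assume "\<not> m < r a"
      have "(g^^(r a)) v \<in> {c..<d}" using allimpD[OF cellfull[OF aA], of v] av vnx by simp
      moreover have "1 \<le> r a" "r a \<le> m" using r1[OF aA] \<open>\<not> m < r a\<close> by auto
      ultimately show False using mv(4) by blast
    qed
    have "y = v + ((g^^m) a - a)" using celltr[OF aA mr av vnx] mv(3) by simp
    then have "y \<in> {(g^^m) a..<(g^^m) a + (nx a - a)}" using av vnx by auto
    moreover have "((g^^m) a, (g^^m) a + (nx a - a)) \<in> F" unfolding F_def Sg_def using aA mr by force
    ultimately show "y \<in> (\<Union>p\<in>F. {fst p..<snd p})" by force
  qed
  have sub2: "(\<Union>p\<in>F. {fst p..<snd p}) \<subseteq> W c d"
  proof
    fix y assume "y \<in> (\<Union>p\<in>F. {fst p..<snd p})"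
    then obtain a k where aA: "a \<in> A0" and k: "k < r a" and y: "(g^^k) a \<le> y" "y < (g^^k) a + (nx a - a)"
      unfolding F_def Sg_def by force
    define v where "v = y - ((g^^k) a - a)"
    have v: "a \<le> v" "v < nx a" using y v_def by auto
    have gv: "(g^^k) v = y" using celltr[OF aA k v] v_def by simp
    have vI: "v \<in> IntI" using v A0J[OF aA] nx2[of a] cd by auto
    have yI: "y \<in> IntI" using G.pow_in[OF vI, of k] gv by simp
    have "(g^^(r a)) v \<in> {c..<d}" using allimpD[OF cellfull[OF aA], of v] v by simp
    moreover have "(g^^(r a)) v = (g^^(r a - k)) ((g^^k) v)"
      using k by (metis funpow_add le_add_diff_inverse2 less_imp_le_nat o_apply)
    ultimately have "(g^^(r a - k)) y \<in> {c..<d}" using gv by simp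
    then show "y \<in> W c d" unfolding W_def using yI by blast
  qed
  show ?thesis using fF sub1 sub2 by blast
qed

end

locale iet =
  fixes f :: "real \<Rightarrow> real" and p q :: "'a::finite \<Rightarrow> real"
  assumes isiet: "is_iet f p q"
begin

lemma card2: "CARD('a) \<ge> 2" and pq: "p \<alpha> < q \<alpha>"
  and disj: "\<alpha> \<noteq> \<beta> \<Longrightarrow> piece p q \<alpha> \<inter> piece p q \<beta> = {}"
  and un: "(\<Union>\<alpha>. piece p q \<alpha>) = IntI" and bij: "bij_betw f IntI IntI"
  and trans: "\<exists>t. \<forall>x\<in>piece p q \<alpha>. f x = x + t"
  using isiet unfolding is_iet_def by auto

lemma piece_iff: "x \<in> piece p q \<alpha> \<longleftrightarrow> p \<alpha> \<le> x \<and> x < q \<alpha>"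
  by (simp add: piece_def)

lemma piece_I: "p \<alpha> \<le> x \<Longrightarrow> x < q \<alpha> \<Longrightarrow> x \<in> IntI"
  using un piece_iff by blast

lemma pb1: "-1 \<le> p \<alpha>"
  using piece_I[of \<alpha> "p \<alpha>"] pq[of \<alpha>] by simp

lemma pb2: "q \<alpha> \<le> 1"
proof (rule ccontr)
  assume a: "\<not> q \<alpha> \<le> 1"
  have "max (p \<alpha>) 1 \<in> IntI" using piece_I[of \<alpha> "max (p \<alpha>) 1"] pq[of \<alpha>] a by simp
  then show False by simp
qed

lemma ex_piece: "x \<in> IntI \<Longrightarrow> \<exists>\<alpha>. p \<alpha> \<le> x \<and> x < q \<alpha>"
  using un piece_iff by blast

lemma uniq: "p \<alpha> \<le> x \<Longrightarrow> x < q \<alpha> \<Longrightarrow> p \<beta> \<le> x \<Longrightarrow> x < q \<beta> \<Longrightarrow> \<alpha> = \<beta>"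
  using disj[of \<alpha> \<beta>] piece_iff by blast

definition t :: "'a \<Rightarrow> real" where "t \<alpha> = f (p \<alpha>) - p \<alpha>"

lemma ftr: "p \<alpha> \<le> x \<Longrightarrow> x < q \<alpha> \<Longrightarrow> f x = x + t \<alpha>"
proof -
  assume x: "p \<alpha> \<le> x" "x < q \<alpha>"
  obtain t0 where t0: "\<forall>x\<in>piece p q \<alpha>. f x = x + t0" using trans by blast
  have "f (p \<alpha>) = p \<alpha> + t0" using t0 pq[of \<alpha>] piece_iff by simp
  moreover have "f x = x + t0" using t0 x piece_iff by simp
  ultimately show ?thesis unfolding t_def by simp
qed

lemma inj: "inj_on f IntI" using bij bij_betw_def by blast
lemma into: "x \<in> IntI \<Longrightarrow> f x \<in> IntI" using bij bij_betwE by blast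
lemma surj: "y \<in> IntI \<Longrightarrow> \<exists>x\<in>IntI. f x = y"
proof -
  assume "y \<in> IntI"
  then have "y \<in> f ` IntI" using bij_betw_imp_surj_on[OF bij] by simp
  then obtain x where "x \<in> IntI" "y = f x" by (rule imageE)
  then show ?thesis by (intro bexI[of _ x]) simp_all
qed
lemma feq: "x \<in> IntI \<Longrightarrow> y \<in> IntI \<Longrightarrow> f x = f y \<Longrightarrow> x = y" by (rule inj_onD[OF inj])

definition P :: "real set" where "P = range p"

lemma finP: "finite P" unfolding P_def by simp

lemma m1P: "-1 \<in> P"
proof -
  obtain \<alpha> where a: "p \<alpha> \<le> -1" "-1 < q \<alpha>" using ex_piece[of "-1"] by auto
  then have "p \<alpha> = -1" using pb1[of \<alpha>] by simp
  then show ?thesis unfolding P_def by (metis rangeI)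
qed

lemma f_rloc: "x \<in> IntI \<Longrightarrow> rloc f x"
proof -
  assume x: "x \<in> IntI"
  obtain \<alpha> where a: "p \<alpha> \<le> x" "x < q \<alpha>" using ex_piece[OF x] by blast
  show ?thesis
  proof (rule rlocI[of "q \<alpha> - x"])
    show "0 < q \<alpha> - x" using a by simp
    fix z assume z: "x \<le> z" "z < x + (q \<alpha> - x)"
    then have z': "p \<alpha> \<le> z" "z < q \<alpha>" using a by auto
    show "z \<in> IntI \<and> f z = z + (f x - x)"
      using piece_I[OF z'] ftr[OF z'] ftr[OF a] by simp
  qed
qed

lemma f_tloc: "x \<in> IntI \<Longrightarrow> x \<notin> P \<Longrightarrow> tloc f x"
proof -
  assume x: "x \<in> IntI" and xP: "x \<notin> P"
  obtain \<alpha> where a: "p \<alpha> \<le> x" "x < q \<alpha>" using ex_piece[OF x] by blast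
  have "p \<alpha> \<noteq> x" using xP unfolding P_def by auto
  then have a1: "p \<alpha> < x" using a by simp
  show ?thesis
  proof (rule tlocI[of "min (x - p \<alpha>) (q \<alpha> - x)"])
    show "0 < min (x - p \<alpha>) (q \<alpha> - x)" using a a1 by simp
    fix z assume z: "x - min (x - p \<alpha>) (q \<alpha> - x) < z" "z < x + min (x - p \<alpha>) (q \<alpha> - x)"
    then have z': "p \<alpha> \<le> z" "z < q \<alpha>" by (auto simp: min_def split: if_splits)
    show "z \<in> IntI \<and> f z = z + (f x - x)"
      using piece_I[OF z'] ftr[OF z'] ftr[OF a] by simp
  qed
qed

definition h :: "real \<Rightarrow> real" where "h = inv_into IntI f"

lemma h_in: "y \<in> IntI \<Longrightarrow> h y \<in> IntI"
  unfolding h_def using bij by (metis bij_betw_def inv_into_into)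

lemma fh: "y \<in> IntI \<Longrightarrow> f (h y) = y"
  unfolding h_def using bij by (metis bij_betw_def f_inv_into_f)

lemma hf: "x \<in> IntI \<Longrightarrow> h (f x) = x"
  unfolding h_def using inj by (rule inv_into_f_f)

lemma h_rloc: "w \<in> IntI \<Longrightarrow> rloc h w"
proof -
  assume w: "w \<in> IntI"
  define y where "y = h w"
  have yI: "y \<in> IntI" and fy: "f y = w" using h_in[OF w] fh[OF w] y_def by auto
  obtain \<alpha> where a: "p \<alpha> \<le> y" "y < q \<alpha>" using ex_piece[OF yI] by blast
  have wt: "w = y + t \<alpha>" using ftr[OF a] fy by simp
  show ?thesis
  proof (rule rlocI[of "q \<alpha> - y"])
    show "0 < q \<alpha> - y" using a by simp
    fix z assume z: "w \<le> z" "z < w + (q \<alpha> - y)"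
    define y' where "y' = z - t \<alpha>"
    have y': "p \<alpha> \<le> y'" "y' < q \<alpha>" using z a wt y'_def by auto
    have fy': "f y' = z" using ftr[OF y'] y'_def by simp
    have y'I: "y' \<in> IntI" using piece_I[OF y'] .
    have zI: "z \<in> IntI" using into[OF y'I] fy' by simp
    have "h z = y'" using hf[OF y'I] fy' by simp
    then show "z \<in> IntI \<and> h z = z + (h w - w)" using zI y'_def wt y_def by simp
  qed
qed

lemma h_tloc: "w \<in> IntI \<Longrightarrow> w \<notin> f ` P \<Longrightarrow> tloc h w"
proof -
  assume w: "w \<in> IntI" and wP: "w \<notin> f ` P"
  define y where "y = h w"
  have yI: "y \<in> IntI" and fy: "f y = w" using h_in[OF w] fh[OF w] y_def by auto
  have yP: "y \<notin> P" using wP fy by auto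
  obtain \<delta> where d: "\<delta> > 0" "\<And>z. y - \<delta> < z \<Longrightarrow> z < y + \<delta> \<Longrightarrow> z \<in> IntI \<and> f z = z + (f y - y)"
    by (fact tlocE[OF f_tloc[OF yI yP]])
  show ?thesis
  proof (rule tlocI[of \<delta>])
    show "0 < \<delta>" using d(1) .
    fix z assume z: "w - \<delta> < z" "z < w + \<delta>"
    define y' where "y' = z - (w - y)"
    have y': "y - \<delta> < y'" "y' < y + \<delta>" using z y'_def by auto
    have y'I: "y' \<in> IntI" and fy': "f y' = z" using d(2)[OF y'] fy y'_def by auto
    have zI: "z \<in> IntI" using into[OF y'I] fy' by simp
    have "h z = y'" using hf[OF y'I] fy' by simp
    then show "z \<in> IntI \<and> h z = z + (h w - w)" using zI y'_def y_def by simp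
  qed
qed

lemma m1fP: "-1 \<in> f ` P"
proof -
  obtain x where x: "x \<in> IntI" "f x = -1" using surj[of "-1"] by auto
  obtain \<alpha> where a: "p \<alpha> \<le> x" "x < q \<alpha>" using ex_piece[OF x(1)] by blast
  have "f (p \<alpha>) = p \<alpha> + t \<alpha>" using ftr[of \<alpha> "p \<alpha>"] pq[of \<alpha>] by simp
  moreover have "f x = x + t \<alpha>" using ftr[OF a] .
  moreover have "f (p \<alpha>) \<in> IntI" using into piece_I[of \<alpha> "p \<alpha>"] pq[of \<alpha>] by simp
  ultimately have "p \<alpha> = x" using a x by auto
  then have "f (p \<alpha>) = -1" using x by simp
  moreover have "p \<alpha> \<in> P" unfolding P_def by simp
  ultimately show ?thesis by (metis image_eqI)
qed

sublocale T: gm2 f P h "f ` P"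
proof (unfold_locales)
  show "finite P" by (rule finP)
  show "-1 \<in> P" by (rule m1P)
  show "inj_on f IntI" by (rule inj)
  show "\<And>y. y \<in> IntI \<Longrightarrow> f y \<in> IntI" by (rule into)
  show "\<And>y. y \<in> IntI \<Longrightarrow> rloc f y" by (rule f_rloc)
  show "\<And>y. y \<in> IntI \<Longrightarrow> y \<notin> P \<Longrightarrow> tloc f y" by (rule f_tloc)
  show "finite (f ` P)" using finP by simp
  show "-1 \<in> f ` P" by (rule m1fP)
  show "inj_on h IntI" using hf h_in unfolding inj_on_def by (metis fh)
  show "\<And>y. y \<in> IntI \<Longrightarrow> h y \<in> IntI" by (rule h_in)
  show "\<And>y. y \<in> IntI \<Longrightarrow> rloc h y" by (rule h_rloc)
  show "\<And>y. y \<in> IntI \<Longrightarrow> y \<notin> f ` P \<Longrightarrow> tloc h y" by (rule h_tloc)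
  show "\<And>y. y \<in> IntI \<Longrightarrow> f (h y) = y" by (rule fh)
qed

end

lemma card2_other: "card S \<ge> 2 \<Longrightarrow> \<exists>x\<in>S. x \<noteq> g"
proof (rule ccontr)
  assume c: "card S \<ge> 2" and n: "\<not> (\<exists>x\<in>S. x \<noteq> g)"
  then have "S \<subseteq> {g}" by auto
  then have "card S \<le> card {g}" by (intro card_mono) simp_all
  then have "card S \<le> 1" by simp
  then show False using c by simp
qed

locale setting = iet f p q for f :: "real \<Rightarrow> real" and p q :: "'a::finite \<Rightarrow> real" +
  assumes irr: "iet_irreducible f p q" and bil: "billiard_like f p q" and kn: "modified_keane f p"
begin

lemma keane: "1 \<le> m \<Longrightarrow> (f^^m) (p \<alpha>) = p \<beta> \<Longrightarrow> p \<beta> = -1 \<or> p \<beta> = 0"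
  using kn unfolding modified_keane_def by blast

lemma keane1: "f (p \<alpha>) = p \<beta> \<Longrightarrow> p \<beta> = -1 \<or> p \<beta> = 0"
  using keane[of 1 \<alpha> \<beta>] by simp

lemma keane2: "f (f (p \<alpha>)) = p \<beta> \<Longrightarrow> p \<beta> = -1 \<or> p \<beta> = 0"
  using keane[of 2 \<alpha> \<beta>] by (simp add: numeral_2_eq_2)

lemma bil_piece: "piece p q \<alpha> \<subseteq> {-1..<0} \<or> piece p q \<alpha> \<subseteq> {0..<1}"
  using bil unfolding billiard_like_def by blast
lemma bil_img: "f ` piece p q \<alpha> \<subseteq> {-1..<0} \<or> f ` piece p q \<alpha> \<subseteq> {0..<1}"
  using bil unfolding billiard_like_def by blast
lemma bil_c1: "card {\<alpha>. piece p q \<alpha> \<subseteq> {-1..<0}} \<ge> 2"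
  using bil unfolding billiard_like_def by blast
lemma bil_c2: "card {\<alpha>. piece p q \<alpha> \<subseteq> {0..<1}} \<ge> 2"
  using bil unfolding billiard_like_def by blast

lemma pmem: "p \<alpha> \<in> piece p q \<alpha>" using pq[of \<alpha>] piece_iff by simp

lemma neg_iff: "piece p q \<alpha> \<subseteq> {-1..<0} \<longleftrightarrow> p \<alpha> < 0"
proof
  assume "piece p q \<alpha> \<subseteq> {-1..<0}" then show "p \<alpha> < 0" using pmem[of \<alpha>] by auto
next
  assume a: "p \<alpha> < 0"
  have "\<not> piece p q \<alpha> \<subseteq> {0..<1}" using pmem[of \<alpha>] a by auto
  then show "piece p q \<alpha> \<subseteq> {-1..<0}" using bil_piece by blast
qed

lemma pos_iff: "piece p q \<alpha> \<subseteq> {0..<1} \<longleftrightarrow> 0 \<le> p \<alpha>"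
proof
  assume "piece p q \<alpha> \<subseteq> {0..<1}" then show "0 \<le> p \<alpha>" using pmem[of \<alpha>] by auto
next
  assume a: "0 \<le> p \<alpha>"
  have "\<not> piece p q \<alpha> \<subseteq> {-1..<0}" using pmem[of \<alpha>] a by auto
  then show "piece p q \<alpha> \<subseteq> {0..<1}" using bil_piece by blast
qed

lemma neg_q: "p \<alpha> < 0 \<Longrightarrow> q \<alpha> \<le> 0"
proof (rule ccontr)
  assume a: "p \<alpha> < 0" "\<not> q \<alpha> \<le> 0"
  have "0 \<in> piece p q \<alpha>" using a piece_iff by simp
  then show False using neg_iff[of \<alpha>] a by auto
qed

lemma fp: "f (p \<alpha>) = p \<alpha> + t \<alpha>" using ftr[of \<alpha> "p \<alpha>"] pq[of \<alpha>] by simp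

lemma e0: "\<exists>\<alpha>. f (p \<alpha>) = 0"
proof -
  obtain x where x: "x \<in> IntI" "f x = 0" using surj[of 0] by auto
  obtain \<alpha> where a: "p \<alpha> \<le> x" "x < q \<alpha>" using ex_piece[OF x(1)] by blast
  have fx: "f x = x + t \<alpha>" using ftr[OF a] .
  have "p \<alpha> = x"
  proof (rule ccontr)
    assume "p \<alpha> \<noteq> x"
    then have lt: "f (p \<alpha>) < 0" using fp[of \<alpha>] fx x a by simp
    have m1: "f (p \<alpha>) \<in> f ` piece p q \<alpha>" using pmem by blast
    have m2: "f x \<in> f ` piece p q \<alpha>" using a piece_iff by blast
    show False using bil_img[of \<alpha>] m1 m2 lt x(2) by auto
  qed
  then show ?thesis using x by blast
qed

lemma e1: "\<exists>\<alpha>. f (p \<alpha>) = -1"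
proof -
  obtain x where x: "x \<in> IntI" "f x = -1" using surj[of "-1"] by auto
  obtain \<alpha> where a: "p \<alpha> \<le> x" "x < q \<alpha>" using ex_piece[OF x(1)] by blast
  have "f (p \<alpha>) \<in> IntI" using into piece_I[OF order_refl pq[of \<alpha>]] by simp
  then have "p \<alpha> = x" using fp[of \<alpha>] ftr[OF a] x a by auto
  then show ?thesis using x by blast
qed

lemma zeroP: "\<exists>\<gamma>. p \<gamma> = 0"
proof -
  obtain \<gamma> where a: "p \<gamma> \<le> 0" "0 < q \<gamma>" using ex_piece[of 0] by auto
  have "\<not> p \<gamma> < 0"
  proof
    assume "p \<gamma> < 0" then have "q \<gamma> \<le> 0" by (rule neg_q)
    then show False using a by simp
  qed
  then have "p \<gamma> = 0" using a(1) by linarith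
  then show ?thesis by blast
qed

lemma m1p: "\<exists>\<gamma>. p \<gamma> = -1"
  using m1P unfolding P_def by auto

lemma right_end: "q \<alpha> < 1 \<Longrightarrow> \<exists>\<beta>. p \<beta> = q \<alpha>"
proof -
  assume q1: "q \<alpha> < 1"
  have "q \<alpha> \<in> IntI" using q1 pq[of \<alpha>] pb1[of \<alpha>] by simp
  then obtain \<beta> where b: "p \<beta> \<le> q \<alpha>" "q \<alpha> < q \<beta>" using ex_piece by blast
  have "\<not> p \<beta> < q \<alpha>"
  proof
    assume lt: "p \<beta> < q \<alpha>"
    define z where "z = max (p \<alpha>) (p \<beta>)"
    have "\<alpha> = \<beta>" by (rule uniq[of \<alpha> z]) (use lt b pq[of \<alpha>] z_def in auto)
    then show False using b by simp
  qed
  then show ?thesis using b by (intro exI[of _ \<beta>]) simp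
qed

lemma q_zero: "p \<gamma> = 0 \<Longrightarrow> q \<gamma> < 1"
proof -
  assume g0: "p \<gamma> = 0"
  obtain \<delta> where d: "\<delta> \<in> {\<alpha>. piece p q \<alpha> \<subseteq> {0..<1}}" "\<delta> \<noteq> \<gamma>"
    using card2_other[OF bil_c2] by blast
  have pd: "0 \<le> p \<delta>" using d(1) pos_iff by simp
  have "p \<delta> \<noteq> 0"
  proof
    assume "p \<delta> = 0"
    then have "\<delta> = \<gamma>" using uniq[of \<delta> 0 \<gamma>] pq[of \<delta>] pq[of \<gamma>] g0 by simp
    then show False using d(2) by simp
  qed
  then have pd': "0 < p \<delta>" using pd by simp
  have "q \<gamma> \<le> p \<delta>"
  proof (rule ccontr)
    assume "\<not> q \<gamma> \<le> p \<delta>"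
    then have "\<delta> = \<gamma>" using uniq[of \<delta> "p \<delta>" \<gamma>] pq[of \<delta>] g0 pd by simp
    then show False using d(2) by simp
  qed
  moreover have "p \<delta> < 1" using pq[of \<delta>] pb2[of \<delta>] by simp
  ultimately show ?thesis by simp
qed

lemma q_m1: "p \<gamma> = -1 \<Longrightarrow> q \<gamma> < 0"
proof -
  assume g0: "p \<gamma> = -1"
  obtain \<delta> where d: "\<delta> \<in> {\<alpha>. piece p q \<alpha> \<subseteq> {-1..<0}}" "\<delta> \<noteq> \<gamma>"
    using card2_other[OF bil_c1] by blast
  have pd: "p \<delta> < 0" using d(1) neg_iff by simp
  have "p \<delta> \<noteq> -1"
  proof
    assume "p \<delta> = -1"
    then have "\<delta> = \<gamma>" using uniq[of \<delta> "-1" \<gamma>] pq[of \<delta>] pq[of \<gamma>] g0 by simp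
    then show False using d(2) by simp
  qed
  then have pd': "-1 < p \<delta>" using pb1[of \<delta>] by simp
  have "q \<gamma> \<le> p \<delta>"
  proof (rule ccontr)
    assume "\<not> q \<gamma> \<le> p \<delta>"
    then have "\<delta> = \<gamma>" using uniq[of \<delta> "p \<delta>" \<gamma>] pq[of \<delta>] g0 pd' by simp
    then show False using d(2) by simp
  qed
  then show ?thesis using pd by simp
qed

lemma IE:
  assumes ab: "a < b" and tr: "\<And>z. a \<le> z \<Longrightarrow> z < b \<Longrightarrow> z \<in> IntI \<and> f z = z + s"
    and wI: "b + s \<in> IntI"
  shows "(\<exists>\<alpha>. f (p \<alpha>) = b + s) \<or> f b = b + s"
proof -
  define w where "w = b + s"
  define y where "y = h w"
  have yI: "y \<in> IntI" and fy: "f y = w" using h_in fh wI y_def w_def by auto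
  obtain \<alpha> where a: "p \<alpha> \<le> y" "y < q \<alpha>" using ex_piece[OF yI] by blast
  show ?thesis
  proof (cases "p \<alpha> = y")
    case True then show ?thesis using fy w_def by auto
  next
    case False
    then have lt: "p \<alpha> < y" using a by simp
    define \<epsilon> where "\<epsilon> = min (y - p \<alpha>) (b - a)"
    have ep: "0 < \<epsilon>" "\<epsilon> \<le> y - p \<alpha>" "\<epsilon> \<le> b - a" using lt ab \<epsilon>_def by auto
    have z1: "p \<alpha> \<le> y - \<epsilon>" "y - \<epsilon> < q \<alpha>" using ep a by auto
    have z2: "a \<le> b - \<epsilon>" "b - \<epsilon> < b" using ep by auto
    have f1: "f (y - \<epsilon>) = w - \<epsilon>" using ftr[OF z1] ftr[OF a] fy by simp
    have f2: "f (b - \<epsilon>) = w - \<epsilon>" and i2: "b - \<epsilon> \<in> IntI" using tr[OF z2] w_def by auto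
    have "y - \<epsilon> = b - \<epsilon>" using feq[OF piece_I[OF z1] i2] f1 f2 by simp
    then have "y = b" by simp
    then show ?thesis using fy w_def by simp
  qed
qed

end

context setting
begin

lemma tr_piece: "p \<gamma> \<le> z \<Longrightarrow> z < q \<gamma> \<Longrightarrow> z \<in> IntI \<and> f z = z + t \<gamma>"
  using piece_I ftr by blast

lemma claimA: "f 0 \<noteq> 0"
proof
  assume f0: "f 0 = 0"
  obtain \<gamma> where g: "p \<gamma> = 0" using zeroP by blast
  have q1: "q \<gamma> < 1" using q_zero[OF g] .
  have q0: "0 < q \<gamma>" using pq[of \<gamma>] g by simp
  have t0: "t \<gamma> = 0" using fp[of \<gamma>] g f0 by simp
  obtain \<beta> where b: "p \<beta> = q \<gamma>" using right_end[OF q1] by blast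
  have "(\<exists>\<alpha>. f (p \<alpha>) = q \<gamma> + 0) \<or> f (q \<gamma>) = q \<gamma> + 0"
  proof (rule IE[OF q0])
    fix z assume "0 \<le> z" "z < q \<gamma>"
    then show "z \<in> IntI \<and> f z = z + 0" using tr_piece[of \<gamma> z] g t0 by simp
  next
    show "q \<gamma> + 0 \<in> IntI" using q0 q1 by simp
  qed
  then show False
  proof
    assume "\<exists>\<alpha>. f (p \<alpha>) = q \<gamma> + 0"
    then obtain \<alpha> where "f (p \<alpha>) = p \<beta>" using b by auto
    then show False using keane1 b q0 q1 by fastforce
  next
    assume "f (q \<gamma>) = q \<gamma> + 0"
    then have "f (p \<beta>) = p \<beta>" using b by simp
    then show False using keane1 b q0 q1 by fastforce
  qed
qed

lemma claimB: "f (-1) \<noteq> -1"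
proof
  assume f0: "f (-1) = -1"
  obtain \<gamma> where g: "p \<gamma> = -1" using m1p by blast
  have q1: "q \<gamma> < 0" using q_m1[OF g] .
  have q0: "-1 < q \<gamma>" using pq[of \<gamma>] g by simp
  have t0: "t \<gamma> = 0" using fp[of \<gamma>] g f0 by simp
  obtain \<beta> where b: "p \<beta> = q \<gamma>" using right_end[of \<gamma>] q1 by auto
  have "(\<exists>\<alpha>. f (p \<alpha>) = q \<gamma> + 0) \<or> f (q \<gamma>) = q \<gamma> + 0"
  proof (rule IE[OF q0])
    fix z assume "-1 \<le> z" "z < q \<gamma>"
    then show "z \<in> IntI \<and> f z = z + 0" using tr_piece[of \<gamma> z] g t0 by simp
  next
    show "q \<gamma> + 0 \<in> IntI" using q0 q1 by simp
  qed
  then show False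
  proof
    assume "\<exists>\<alpha>. f (p \<alpha>) = q \<gamma> + 0"
    then obtain \<alpha> where "f (p \<alpha>) = p \<beta>" using b by auto
    then show False using keane1 b q0 q1 by fastforce
  next
    assume "f (q \<gamma>) = q \<gamma> + 0"
    then have "f (p \<beta>) = p \<beta>" using b by simp
    then show False using keane1 b q0 q1 by fastforce
  qed
qed

lemma claimC: "\<not> (f 0 = -1 \<and> f (-1) = 0)"
proof
  assume ff: "f 0 = -1 \<and> f (-1) = 0"
  obtain \<gamma>0 where g0: "p \<gamma>0 = 0" using zeroP by blast
  obtain \<gamma>1 where g1: "p \<gamma>1 = -1" using m1p by blast
  define q0 where "q0 = q \<gamma>0"
  define q1 where "q1 = q \<gamma>1"
  have q0r: "0 < q0" "q0 < 1" using q_zero[OF g0] pq[of \<gamma>0] g0 q0_def by auto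
  have q1r: "-1 < q1" "q1 < 0" using q_m1[OF g1] pq[of \<gamma>1] g1 q1_def by auto
  have t0: "t \<gamma>0 = -1" using fp[of \<gamma>0] g0 ff by simp
  have t1: "t \<gamma>1 = 1" using fp[of \<gamma>1] g1 ff by simp
  obtain \<beta>0 where b0: "p \<beta>0 = q0" using right_end[of \<gamma>0] q0r q0_def by auto
  obtain \<beta>1 where b1: "p \<beta>1 = q1" using right_end[of \<gamma>1] q1r q1_def by auto
  have tr0: "z \<in> IntI \<and> f z = z + -1" if "0 \<le> z" "z < q0" for z
    using tr_piece[of \<gamma>0 z] g0 t0 q0_def that by simp
  have tr1: "z \<in> IntI \<and> f z = z + 1" if "-1 \<le> z" "z < q1" for z
    using tr_piece[of \<gamma>1 z] g1 t1 q1_def that by simp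
  have nb0: "\<not> (p \<beta>0 = -1 \<or> p \<beta>0 = 0)" using b0 q0r by simp
  have nb1: "\<not> (p \<beta>1 = -1 \<or> p \<beta>1 = 0)" using b1 q1r by simp
  consider "q0 < q1 + 1" | "q0 = q1 + 1" | "q1 + 1 < q0" by linarith
  then show False
  proof cases
    case 1
    have w: "q0 - 1 \<in> IntI" using q0r by simp
    have fw: "f (q0 - 1) = q0" using tr1[of "q0 - 1"] 1 q0r by simp
    have "(\<exists>\<alpha>. f (p \<alpha>) = q0 + -1) \<or> f q0 = q0 + -1"
      by (rule IE[OF q0r(1) tr0]) (use w in simp_all)
    then show False
    proof
      assume "\<exists>\<alpha>. f (p \<alpha>) = q0 + -1"
      then obtain \<alpha> where "f (p \<alpha>) = q0 - 1" by auto
      then have "f (f (p \<alpha>)) = p \<beta>0" using fw b0 by simp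
      then show False using keane2 nb0 by blast
    next
      assume "f q0 = q0 + -1"
      then have "f (f (p \<beta>0)) = p \<beta>0" using fw b0 by simp
      then show False using keane2 nb0 by blast
    qed
  next
    case 2
    have w: "q0 - 1 \<in> IntI" using q0r by simp
    have "(\<exists>\<alpha>. f (p \<alpha>) = q0 + -1) \<or> f q0 = q0 + -1"
      by (rule IE[OF q0r(1) tr0]) (use w in simp_all)
    then show False
    proof
      assume "\<exists>\<alpha>. f (p \<alpha>) = q0 + -1"
      then obtain \<alpha> where "f (p \<alpha>) = p \<beta>1" using 2 b1 by auto
      then show False using keane1 nb1 by blast
    next
      assume "f q0 = q0 + -1"
      then have "f (p \<beta>0) = p \<beta>1" using 2 b0 b1 by simp
      then show False using keane1 nb1 by blast
    qed
  next
    case 3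
    have w: "q1 + 1 \<in> IntI" using q1r by simp
    have fw: "f (q1 + 1) = q1" using tr0[of "q1 + 1"] 3 q1r by simp
    have "(\<exists>\<alpha>. f (p \<alpha>) = q1 + 1) \<or> f q1 = q1 + 1"
      by (rule IE[OF q1r(1) tr1]) (use w in simp_all)
    then show False
    proof
      assume "\<exists>\<alpha>. f (p \<alpha>) = q1 + 1"
      then obtain \<alpha> where "f (p \<alpha>) = q1 + 1" by auto
      then have "f (f (p \<alpha>)) = p \<beta>1" using fw b1 by simp
      then show False using keane2 nb1 by blast
    next
      assume "f q1 = q1 + 1"
      then have "f (f (p \<beta>1)) = p \<beta>1" using fw b1 by simp
      then show False using keane2 nb1 by blast
    qed
  qed
qed

lemma periodic_pred:
  assumes k: "1 \<le> k" and y: "y \<in> IntI" and e: "e \<in> IntI" and fe: "f e = y" and per: "(f^^k) y = y"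
  shows "(f^^k) e = e"
proof -
  obtain k' where k': "k = Suc k'" using k by (cases k) auto
  have a: "(f^^k) e = (f^^k') y" unfolding k' using fe by (simp only: funpow_Suc_right o_apply)
  have "f ((f^^k') y) = y" using per unfolding k' by simp
  then have "f ((f^^k') y) = f e" using fe by simp
  then have "(f^^k') y = e" using feq[OF T.G.pow_in[OF y] e] by simp
  then show ?thesis using a by simp
qed

lemma periodic_p: "1 \<le> k \<Longrightarrow> y \<in> IntI \<Longrightarrow> f (p \<alpha>) = y \<Longrightarrow> (f^^k) y = y \<Longrightarrow> p \<alpha> = -1 \<or> p \<alpha> = 0"
  using periodic_pred[of k y "p \<alpha>"] keane[of k \<alpha> \<alpha>] piece_I[OF order_refl pq[of \<alpha>]] by simp

lemma per0: "1 \<le> k \<Longrightarrow> (f^^k) 0 \<noteq> 0"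
proof
  assume k: "1 \<le> k" and per: "(f^^k) 0 = 0"
  obtain \<alpha>0 where a0: "f (p \<alpha>0) = 0" using e0 by blast
  obtain \<alpha>1 where a1: "f (p \<alpha>1) = -1" using e1 by blast
  have "p \<alpha>0 = -1 \<or> p \<alpha>0 = 0" using periodic_p[OF k _ a0 per] by simp
  then show False
  proof
    assume "p \<alpha>0 = 0" then show False using a0 claimA by simp
  next
    assume m: "p \<alpha>0 = -1"
    then have fm: "f (-1) = 0" using a0 by simp
    have per1: "(f^^k) (-1) = -1" using periodic_pred[OF k _ _ fm per] by simp
    have "p \<alpha>1 = -1 \<or> p \<alpha>1 = 0" using periodic_p[OF k _ a1 per1] by simp
    then show False
    proof
      assume "p \<alpha>1 = -1" then show False using a1 fm by simp
    next
      assume "p \<alpha>1 = 0" then show False using a1 fm claimC by simp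
    qed
  qed
qed

lemma per1: "1 \<le> k \<Longrightarrow> (f^^k) (-1) \<noteq> -1"
proof
  assume k: "1 \<le> k" and per: "(f^^k) (-1) = -1"
  obtain \<alpha>1 where a1: "f (p \<alpha>1) = -1" using e1 by blast
  have "p \<alpha>1 = -1 \<or> p \<alpha>1 = 0" using periodic_p[OF k _ a1 per] by simp
  then show False
  proof
    assume "p \<alpha>1 = -1" then show False using a1 claimB by simp
  next
    assume "p \<alpha>1 = 0"
    then have fm: "f 0 = -1" using a1 by simp
    have "(f^^k) 0 = 0" using periodic_pred[OF k _ _ fm per] by simp
    then show False using per0[OF k] by simp
  qed
qed

lemma noper:
  assumes y: "y \<in> IntI" and k: "1 \<le> k" and per: "(f^^k) y = y"
  shows False
proof -
  obtain \<delta> where d: "\<delta> > 0" "\<And>z. y \<le> z \<Longrightarrow> z < y + \<delta> \<Longrightarrow> z \<in> IntI \<and> (f^^k) z = z + ((f^^k) y - y)"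
    by (fact rlocE[OF T.G.pow_rloc[OF y]])
  define X where "X = {a'. -1 \<le> a' \<and> a' \<le> y \<and> (\<forall>z. a' \<le> z \<and> z < y + \<delta> \<longrightarrow> (f^^k) z = z)}"
  have yX: "y \<in> X" unfolding X_def using y d per by auto
  have bdd: "bdd_below X" unfolding X_def by (rule bdd_belowI[of _ "-1"]) simp
  define a where "a = Inf X"
  have a1: "-1 \<le> a" unfolding a_def using yX X_def by (intro cInf_greatest) auto
  have a2: "a \<le> y" unfolding a_def by (rule cInf_lower[OF yX bdd])
  have aI: "a \<in> IntI" using a1 a2 y by auto
  have idr: "(f^^k) z = z" if "a < z" "z < y + \<delta>" for z
  proof -
    have "Inf X < z" using that(1) a_def by simp
    then have "\<exists>x\<in>X. x < z" by (subst (asm) cInf_less_iff[OF _ bdd]) (use yX in auto)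
    then obtain a' where a': "a' \<in> X" "a' < z" by blast
    then have "\<forall>z. a' \<le> z \<and> z < y + \<delta> \<longrightarrow> (f^^k) z = z" unfolding X_def by blast
    from allimpD[OF this, of z] show ?thesis using a'(2) that(2) by simp
  qed
  obtain \<delta>2 where d2: "\<delta>2 > 0" "\<And>z. a \<le> z \<Longrightarrow> z < a + \<delta>2 \<Longrightarrow> z \<in> IntI \<and> (f^^k) z = z + ((f^^k) a - a)"
    by (fact rlocE[OF T.G.pow_rloc[OF aI]])
  define m where "m = min \<delta>2 (y + \<delta> - a)"
  have mm: "0 < m" "m \<le> \<delta>2" "m \<le> y + \<delta> - a"
    using d(1) d2(1) a2 m_def by auto
  define z0 where "z0 = a + m / 2"
  have z0r1: "a < z0" unfolding z0_def using mm by linarith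
  have z0r2: "z0 < y + \<delta>" unfolding z0_def using mm by linarith
  have z0r3: "z0 < a + \<delta>2" unfolding z0_def using mm by linarith
  note z0r = z0r1 z0r2 z0r3
  have pa: "(f^^k) a = a" using idr[OF z0r(1,2)] d2(2)[of z0] z0r by simp
  show False
  proof (cases "a = -1")
    case True then show False using per1[OF k] pa by simp
  next
    case False
    then have am: "-1 < a" using a1 by simp
    show False
    proof (cases "\<exists>j<k. (f^^j) a \<in> P")
      case True
      then obtain j \<beta> where j: "j < k" "(f^^j) a = p \<beta>" unfolding P_def by blast
      have "(f^^k) (p \<beta>) = p \<beta>"
      proof -
        have "(f^^k) ((f^^j) a) = (f^^(k + j)) a" by (simp add: funpow_add)
        also have "\<dots> = (f^^j) ((f^^k) a)" by (simp add: funpow_add add.commute)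
        finally show ?thesis using pa j(2) by simp
      qed
      then have pb: "p \<beta> = -1 \<or> p \<beta> = 0" using keane[OF k] by simp
      then show False
      proof
        assume "p \<beta> = -1" then show False using per1[OF k] \<open>(f^^k) (p \<beta>) = p \<beta>\<close> by simp
      next
        assume "p \<beta> = 0" then show False using per0[OF k] \<open>(f^^k) (p \<beta>) = p \<beta>\<close> by simp
      qed
    next
      case False
      then have nP: "\<forall>j<k. (f^^j) a \<notin> P" by blast
      have a0P: "a \<notin> P" using nP k by (metis funpow_0 less_le_trans zero_less_one)
      obtain \<delta>3 where d3: "\<delta>3 > 0" "\<And>z. a - \<delta>3 < z \<Longrightarrow> z < a + \<delta>3 \<Longrightarrow> z \<in> IntI \<and> (f^^k) z = z + ((f^^k) a - a)"
        by (fact tlocE[OF T.G.pow_tloc[OF aI a0P nP]])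
      define a'' where "a'' = max (-1) (a - \<delta>3 / 2)"
      have a''r: "-1 \<le> a''" "a'' < a" "a - \<delta>3 < a''" using a''_def am d3(1) by auto
      have "a'' \<in> X" unfolding X_def
      proof (intro CollectI conjI allI impI)
        show "-1 \<le> a''" using a''r by simp
        show "a'' \<le> y" using a''r a2 by simp
        fix z assume z: "a'' \<le> z \<and> z < y + \<delta>"
        show "(f^^k) z = z"
        proof (cases "a < z")
          case True then show ?thesis using idr z by simp
        next
          case False
          then have "a - \<delta>3 < z" "z < a + \<delta>3" using z a''r d3(1) by auto
          then show ?thesis using d3(2)[of z] pa by simp
        qed
      qed
      then have "a \<le> a''" unfolding a_def using bdd by (rule cInf_lower)
      then show False using a''r by simp
    qed
  qed
qed

end

lemma U1:
  fixes F :: "(real \<times> real) set"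
  assumes "y \<in> (\<Union>p\<in>F. {fst p..<snd p})"
  shows "\<exists>\<delta>>0. \<forall>z. y \<le> z \<and> z < y + \<delta> \<longrightarrow> z \<in> (\<Union>p\<in>F. {fst p..<snd p})"
proof -
  obtain pp where pp: "pp \<in> F" "fst pp \<le> y" "y < snd pp" using assms by auto
  show ?thesis
  proof (intro exI[of _ "snd pp - y"] conjI allI impI)
    show "0 < snd pp - y" using pp by simp
    fix z assume "y \<le> z \<and> z < y + (snd pp - y)"
    then have "z \<in> {fst pp..<snd pp}" using pp by auto
    then show "z \<in> (\<Union>p\<in>F. {fst p..<snd p})" using pp(1) by blast
  qed
qed

lemma U2:
  fixes F :: "(real \<times> real) set"
  assumes fin: "finite F" and b: "b \<notin> (\<Union>p\<in>F. {fst p..<snd p})"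
  shows "\<exists>\<epsilon>>0. \<forall>z. b \<le> z \<and> z < b + \<epsilon> \<longrightarrow> z \<notin> (\<Union>p\<in>F. {fst p..<snd p})"
proof -
  define ef where "ef pp = (if b < fst pp then fst pp - b else 1)" for pp :: "real \<times> real"
  define \<epsilon> where "\<epsilon> = Min (insert 1 (ef ` F))"
  have fe: "finite (insert 1 (ef ` F))" using fin by simp
  have pos: "\<forall>x\<in>insert 1 (ef ` F). 0 < x" unfolding ef_def by auto
  have ep: "0 < \<epsilon>" unfolding \<epsilon>_def using fe pos by (simp add: Min_gr_iff)
  have le: "\<epsilon> \<le> ef pp" if "pp \<in> F" for pp unfolding \<epsilon>_def using fe that by (intro Min_le) auto
  show ?thesis
  proof (intro exI[of _ \<epsilon>] conjI allI impI)
    show "0 < \<epsilon>" by (rule ep)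
    fix z assume z: "b \<le> z \<and> z < b + \<epsilon>"
    show "z \<notin> (\<Union>p\<in>F. {fst p..<snd p})"
    proof
      assume "z \<in> (\<Union>p\<in>F. {fst p..<snd p})"
      then obtain pp where pp: "pp \<in> F" "fst pp \<le> z" "z < snd pp" by auto
      show False
      proof (cases "b < fst pp")
        case True
        then have "\<epsilon> \<le> fst pp - b" using le[OF pp(1)] ef_def by simp
        then show False using z pp by simp
      next
        case False
        then have "snd pp \<le> b" using b pp(1) by auto
        then show False using z pp by simp
      qed
    qed
  qed
qed

lemma U3:
  fixes F :: "(real \<times> real) set"
  assumes fin: "finite F" and b: "b \<notin> fst ` F \<union> snd ` F"
  shows "\<exists>\<epsilon>>0. \<forall>z. b - \<epsilon> < z \<and> z < b \<longrightarrow> (z \<in> (\<Union>p\<in>F. {fst p..<snd p}) \<longleftrightarrow> b \<in> (\<Union>p\<in>F. {fst p..<snd p}))"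
proof -
  define ef where "ef pp = (if b < fst pp then 1 else if b < snd pp then b - fst pp else b - snd pp)" for pp :: "real \<times> real"
  define \<epsilon> where "\<epsilon> = Min (insert 1 (ef ` F))"
  have fe: "finite (insert 1 (ef ` F))" using fin by simp
  have pos: "0 < ef pp" if "pp \<in> F" for pp
  proof -
    have "b \<noteq> fst pp" "b \<noteq> snd pp" using b that by force+
    then show ?thesis unfolding ef_def by auto
  qed
  have ep: "0 < \<epsilon>" unfolding \<epsilon>_def using fe pos by (simp add: Min_gr_iff)
  have le: "\<epsilon> \<le> ef pp" if "pp \<in> F" for pp unfolding \<epsilon>_def using fe that by (intro Min_le) auto
  have loc: "z \<in> {fst pp..<snd pp} \<longleftrightarrow> b \<in> {fst pp..<snd pp}" if pp: "pp \<in> F" and z: "b - \<epsilon> < z" "z < b" for pp z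
  proof -
    have "b \<noteq> fst pp" "b \<noteq> snd pp" using b pp by force+
    consider "b < fst pp" | "fst pp < b" "b < snd pp" | "fst pp < b" "snd pp < b" | "snd pp \<le> fst pp"
      using \<open>b \<noteq> fst pp\<close> \<open>b \<noteq> snd pp\<close> by linarith
    then show ?thesis
    proof cases
      case 1 then show ?thesis using z by auto
    next
      case 2
      then have "\<epsilon> \<le> b - fst pp" using le[OF pp] ef_def by simp
      then show ?thesis using z 2 by auto
    next
      case 3
      then have "\<epsilon> \<le> b - snd pp" using le[OF pp] ef_def by auto
      then show ?thesis using z 3 by auto
    next
      case 4 then show ?thesis by auto
    qed
  qed
  show ?thesis
  proof (intro exI[of _ \<epsilon>] conjI allI impI)
    show "0 < \<epsilon>" by (rule ep)
    fix z assume z: "b - \<epsilon> < z \<and> z < b"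
    show "z \<in> (\<Union>p\<in>F. {fst p..<snd p}) \<longleftrightarrow> b \<in> (\<Union>p\<in>F. {fst p..<snd p})"
      using loc z by blast
  qed
qed

lemma halves:
  fixes F :: "(real \<times> real) set"
  assumes fin: "finite F" and T: "T = (\<Union>p\<in>F. {fst p..<snd p})"
    and nb: "\<And>b. lo < b \<Longrightarrow> b < hi \<Longrightarrow> \<not> (\<exists>\<epsilon>>0. \<forall>z. b - \<epsilon> < z \<and> z < b \<longrightarrow> (z \<in> T \<longleftrightarrow> b \<notin> T))"
    and y1: "lo \<le> y1" "y1 < hi" and y2: "lo \<le> y2" "y2 < hi" and m1: "y1 \<in> T" and m2: "y2 \<notin> T"
  shows False
proof (cases "y1 < y2")
  case True
  define X where "X = {s. y1 \<le> s \<and> s \<le> y2 \<and> s \<notin> T}"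
  have y2X: "y2 \<in> X" using True m2 X_def by simp
  have bdd: "bdd_below X" unfolding X_def by (rule bdd_belowI[of _ y1]) simp
  define b where "b = Inf X"
  obtain \<delta> where d: "\<delta> > 0" "\<forall>z. y1 \<le> z \<and> z < y1 + \<delta> \<longrightarrow> z \<in> T" using U1[of y1 F] m1 T by auto
  have b1: "y1 + \<delta> \<le> b" unfolding b_def
  proof (rule cInf_greatest)
    show "X \<noteq> {}" using y2X by blast
    fix s assume "s \<in> X" then show "y1 + \<delta> \<le> s" using d X_def by force
  qed
  have b2: "b \<le> y2" unfolding b_def by (rule cInf_lower[OF y2X bdd])
  have bT: "b \<notin> T"
  proof
    assume "b \<in> T"
    then obtain \<delta>' where d': "\<delta>' > 0" "\<forall>z. b \<le> z \<and> z < b + \<delta>' \<longrightarrow> z \<in> T" using U1[of b F] T by auto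
    have "b + \<delta>' \<le> b" unfolding b_def
    proof (rule cInf_greatest)
      show "X \<noteq> {}" using y2X by blast
      fix s assume sX: "s \<in> X"
      have "Inf X \<le> s" using sX bdd by (rule cInf_lower)
      show "Inf X + \<delta>' \<le> s"
      proof (rule ccontr)
        assume "\<not> Inf X + \<delta>' \<le> s"
        then have "b \<le> s \<and> s < b + \<delta>'" using \<open>Inf X \<le> s\<close> b_def by simp
        then have "s \<in> T" using d'(2) by blast
        then show False using sX X_def by simp
      qed
    qed
    then show False using d' by simp
  qed
  have left: "z \<in> T" if "b - (b - y1) < z" "z < b" for z
  proof (rule ccontr)
    assume "z \<notin> T"
    then have "z \<in> X" using that b2 X_def by simp
    then have "b \<le> z" unfolding b_def using bdd by (rule cInf_lower)
    then show False using that by simp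
  qed
  have "\<exists>\<epsilon>>0. \<forall>z. b - \<epsilon> < z \<and> z < b \<longrightarrow> (z \<in> T \<longleftrightarrow> b \<notin> T)"
    using left bT b1 d(1) by (intro exI[of _ "b - y1"]) auto
  then show False using nb[of b] y1 b1 b2 y2 d(1) by simp
next
  case False
  then have lt: "y2 < y1" using m1 m2 by (cases "y1 = y2") auto
  define X where "X = {s. y2 \<le> s \<and> s \<le> y1 \<and> s \<in> T}"
  have y1X: "y1 \<in> X" using lt m1 X_def by simp
  have bdd: "bdd_below X" unfolding X_def by (rule bdd_belowI[of _ y2]) simp
  define b where "b = Inf X"
  obtain \<epsilon> where e: "\<epsilon> > 0" "\<forall>z. y2 \<le> z \<and> z < y2 + \<epsilon> \<longrightarrow> z \<notin> T" using U2[OF fin, of y2] m2 T by auto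
  have b1: "y2 + \<epsilon> \<le> b" unfolding b_def
  proof (rule cInf_greatest)
    show "X \<noteq> {}" using y1X by blast
    fix s assume "s \<in> X" then show "y2 + \<epsilon> \<le> s" using e X_def by force
  qed
  have b2: "b \<le> y1" unfolding b_def by (rule cInf_lower[OF y1X bdd])
  have bT: "b \<in> T"
  proof (rule ccontr)
    assume "b \<notin> T"
    then obtain \<epsilon>' where e': "\<epsilon>' > 0" "\<forall>z. b \<le> z \<and> z < b + \<epsilon>' \<longrightarrow> z \<notin> T" using U2[OF fin, of b] T by auto
    have "b + \<epsilon>' \<le> b" unfolding b_def
    proof (rule cInf_greatest)
      show "X \<noteq> {}" using y1X by blast
      fix s assume sX: "s \<in> X"
      have "Inf X \<le> s" using sX bdd by (rule cInf_lower)
      show "Inf X + \<epsilon>' \<le> s"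
      proof (rule ccontr)
        assume "\<not> Inf X + \<epsilon>' \<le> s"
        then have "b \<le> s \<and> s < b + \<epsilon>'" using \<open>Inf X \<le> s\<close> b_def by simp
        then have "s \<notin> T" using e'(2) by blast
        then show False using sX X_def by simp
      qed
    qed
    then show False using e' by simp
  qed
  have left: "z \<notin> T" if "b - (b - y2) < z" "z < b" for z
  proof
    assume "z \<in> T"
    then have "z \<in> X" using that b2 X_def by simp
    then have "b \<le> z" unfolding b_def using bdd by (rule cInf_lower)
    then show False using that by simp
  qed
  have "\<exists>\<epsilon>>0. \<forall>z. b - \<epsilon> < z \<and> z < b \<longrightarrow> (z \<in> T \<longleftrightarrow> b \<notin> T)"
    using left bT b1 e(1) by (intro exI[of _ "b - y2"]) auto
  then show False using nb[of b] y2 b1 b2 y1 e(1) by simp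
qed

context setting
begin

lemma orbit_inj:
  assumes y: "y \<in> IntI" and eq: "(f^^i) y = (f^^j) y"
  shows "i = j"
proof (rule ccontr)
  assume ne: "i \<noteq> j"
  have gen: "False" if lt: "i' < j'" and e: "(f^^i') y = (f^^j') y" for i' j'
  proof -
    have "(f^^j') y = (f^^(j' - i')) ((f^^i') y)"
      using lt by (metis funpow_add le_add_diff_inverse2 less_imp_le_nat o_apply)
    then have "(f^^(j' - i')) ((f^^i') y) = (f^^i') y" using e by simp
    moreover have "1 \<le> j' - i'" using lt by simp
    ultimately show False using noper[OF T.G.pow_in[OF y]] by blast
  qed
  show False
  proof (cases "i < j")
    case True then show False using gen eq by blast
  next
    case False then have "j < i" using ne by simp
    then show False using gen eq by metis
  qed
qed

lemma irr_neg: "\<not> (f ` {-1..<0} \<subseteq> {-1..<0})"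
proof -
  define N where "N = {\<alpha>. p \<alpha> < 0}"
  define k where "k = card N"
  have N1: "N = {\<alpha>. piece p q \<alpha> \<subseteq> {-1..<0}}" unfolding N_def using neg_iff by blast
  have N2: "-N = {\<alpha>. piece p q \<alpha> \<subseteq> {0..<1}}" unfolding N_def using pos_iff by force
  have k2: "2 \<le> k" using bil_c1 N1 k_def by simp
  have c2: "2 \<le> card (-N)" using bil_c2 N2 by simp
  have "card (N \<union> -N) = card N + card (-N)" by (rule card_Un_disjoint) auto
  then have "CARD('a) = k + card (-N)" using k_def by (simp add: Compl_partition)
  then have kC: "k < CARD('a)" using c2 by simp
  have S: "{\<alpha>. pi0 p \<alpha> \<le> k} = N"
  proof (intro set_eqI iffI)
    fix \<alpha> assume "\<alpha> \<in> N"
    then have "{\<beta>. p \<beta> \<le> p \<alpha>} \<subseteq> N" unfolding N_def by auto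
    then have "card {\<beta>. p \<beta> \<le> p \<alpha>} \<le> k" unfolding k_def by (intro card_mono) simp_all
    then show "\<alpha> \<in> {\<alpha>. pi0 p \<alpha> \<le> k}" unfolding pi0_def by simp
  next
    fix \<alpha> assume a: "\<alpha> \<in> {\<alpha>. pi0 p \<alpha> \<le> k}"
    show "\<alpha> \<in> N"
    proof (rule ccontr)
      assume an: "\<alpha> \<notin> N"
      then have "insert \<alpha> N \<subseteq> {\<beta>. p \<beta> \<le> p \<alpha>}" unfolding N_def by auto
      then have "card (insert \<alpha> N) \<le> card {\<beta>. p \<beta> \<le> p \<alpha>}" by (intro card_mono) simp_all
      then have "k + 1 \<le> pi0 p \<alpha>" unfolding pi0_def k_def using an by simp
      then show False using a by simp
    qed
  qed
  have U: "(\<Union>\<alpha>\<in>N. piece p q \<alpha>) = {-1..<0}"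
  proof (intro set_eqI iffI)
    fix y assume "y \<in> (\<Union>\<alpha>\<in>N. piece p q \<alpha>)"
    then obtain \<alpha> where "\<alpha> \<in> N" "y \<in> piece p q \<alpha>" by auto
    then show "y \<in> {-1..<0}" using N1 by auto
  next
    fix y :: real assume y: "y \<in> {-1..<0}"
    then obtain \<alpha> where a: "p \<alpha> \<le> y" "y < q \<alpha>" using ex_piece[of y] by auto
    then have "\<alpha> \<in> N" using y N_def by auto
    then show "y \<in> (\<Union>\<alpha>\<in>N. piece p q \<alpha>)" using a piece_iff by auto
  qed
  have "1 \<le> k \<and> k < CARD('a)" using k2 kC by simp
  then have "\<not> (f ` (\<Union>\<alpha>\<in>{\<alpha>. pi0 p \<alpha> \<le> k}. piece p q \<alpha>) \<subseteq> (\<Union>\<alpha>\<in>{\<alpha>. pi0 p \<alpha> \<le> k}. piece p q \<alpha>))"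
    using irr unfolding iet_irreducible_def by blast
  then show ?thesis unfolding S U .
qed

lemma enter:
  assumes cd: "-1 \<le> c" "c < d" "d \<le> 1" and x: "x \<in> IntI"
  shows "\<exists>n. (f^^n) x \<in> {c..<d}"
proof -
  define W where "W = T.W c d"
  obtain F where fF: "finite F" and WF: "W = (\<Union>p\<in>F. {fst p..<snd p})"
    using T.W_repr[OF cd] W_def by blast
  have inv: "y \<in> W \<longleftrightarrow> f y \<in> W" if "y \<in> IntI" for y using T.W_inv[OF cd that] W_def by simp
  have WI: "W \<subseteq> IntI" unfolding W_def T.W_def by auto
  define isbd where "isbd b \<longleftrightarrow> -1 < b \<and> b < 1 \<and> (\<exists>\<epsilon>>0. \<forall>z. b - \<epsilon> < z \<and> z < b \<longrightarrow> (z \<in> W \<longleftrightarrow> b \<notin> W))" for b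
  have finbd: "finite {b. isbd b}"
  proof (rule finite_subset)
    show "{b. isbd b} \<subseteq> fst ` F \<union> snd ` F"
    proof
      fix b assume "b \<in> {b. isbd b}"
      then obtain \<epsilon> where e: "\<epsilon> > 0" "\<forall>z. b - \<epsilon> < z \<and> z < b \<longrightarrow> (z \<in> W \<longleftrightarrow> b \<notin> W)"
        unfolding isbd_def by blast
      show "b \<in> fst ` F \<union> snd ` F"
      proof (rule ccontr)
        assume "b \<notin> fst ` F \<union> snd ` F"
        then obtain \<epsilon>' where e': "\<epsilon>' > 0" "\<forall>z. b - \<epsilon>' < z \<and> z < b \<longrightarrow> (z \<in> W \<longleftrightarrow> b \<in> W)"
          using U3[OF fF] WF by blast
        define z where "z = b - min \<epsilon> \<epsilon>' / 2"
        have "b - \<epsilon> < z \<and> z < b" "b - \<epsilon>' < z \<and> z < b" using e(1) e'(1) z_def by (auto simp: min_def)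
        then have "(z \<in> W \<longleftrightarrow> b \<notin> W)" "(z \<in> W \<longleftrightarrow> b \<in> W)" using e(2) e'(2) by blast+
        then show False by blast
      qed
    qed
    show "finite (fst ` F \<union> snd ` F)" using fF by simp
  qed
  have bdI: "b \<in> IntI" if "isbd b" for b using that isbd_def by auto
  have F2: "isbd (f b)" if bd: "isbd b" and bP: "b \<notin> P" for b
  proof -
    have bI: "b \<in> IntI" using bdI[OF bd] .
    obtain \<epsilon> where e: "\<epsilon> > 0" "\<forall>z. b - \<epsilon> < z \<and> z < b \<longrightarrow> (z \<in> W \<longleftrightarrow> b \<notin> W)"
      using bd unfolding isbd_def by blast
    obtain \<delta> where d: "\<delta> > 0" "\<And>z. b - \<delta> < z \<Longrightarrow> z < b + \<delta> \<Longrightarrow> z \<in> IntI \<and> f z = z + (f b - b)"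
      by (fact tlocE[OF f_tloc[OF bI bP]])
    define e' where "e' = min \<epsilon> \<delta>"
    have e'p: "0 < e'" "e' \<le> \<epsilon>" "e' \<le> \<delta>" using e(1) d(1) e'_def by auto
    have fbI: "f b \<in> IntI" using into[OF bI] .
    have fbm: "f b \<noteq> -1"
    proof
      assume fm: "f b = -1"
      have zz: "b - \<delta> < b - e' / 2" "b - e' / 2 < b + \<delta>" using e'p by auto
      have "b - e' / 2 \<in> IntI \<and> f (b - e' / 2) = b - e' / 2 + (f b - b)" using d(2)[OF zz] .
      then have "f (b - e' / 2) = -1 - e' / 2" "f (b - e' / 2) \<in> IntI" using fm into[of "b - e' / 2"] e'p by auto
      then show False using e'p by simp
    qed
    show ?thesis unfolding isbd_def
    proof (intro conjI exI[of _ e'] allI impI)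
      show "-1 < f b" "f b < 1" using fbI fbm by auto
      show "0 < e'" by (rule e'p(1))
      fix z assume z: "f b - e' < z \<and> z < f b"
      define z' where "z' = z - (f b - b)"
      have z'r: "b - e' < z'" "z' < b" using z z'_def by auto
      have "z' \<in> IntI \<and> f z' = z' + (f b - b)" using d(2)[of z'] z'r e'p by simp
      then have z'I: "z' \<in> IntI" and fz': "f z' = z" using z'_def by auto
      have "z' \<in> W \<longleftrightarrow> b \<notin> W" using e(2) z'r e'p by simp
      then show "z \<in> W \<longleftrightarrow> f b \<notin> W" using inv[OF z'I] inv[OF bI] fz' by simp
    qed
  qed
  have F3: "\<exists>v. isbd v \<and> f v = b" if bd: "isbd b" and bP: "b \<notin> f ` P" for b
  proof -
    have bI: "b \<in> IntI" using bdI[OF bd] .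
    define v where "v = h b"
    have vI: "v \<in> IntI" and fv: "f v = b" using h_in[OF bI] fh[OF bI] v_def by auto
    have vP: "v \<notin> P" using bP fv by auto
    have vm: "v \<noteq> -1" using vP m1P by auto
    obtain \<epsilon> where e: "\<epsilon> > 0" "\<forall>z. b - \<epsilon> < z \<and> z < b \<longrightarrow> (z \<in> W \<longleftrightarrow> b \<notin> W)"
      using bd unfolding isbd_def by blast
    obtain \<delta> where d: "\<delta> > 0" "\<And>z. v - \<delta> < z \<Longrightarrow> z < v + \<delta> \<Longrightarrow> z \<in> IntI \<and> f z = z + (f v - v)"
      by (fact tlocE[OF f_tloc[OF vI vP]])
    define e' where "e' = min \<epsilon> \<delta>"
    have e'p: "0 < e'" "e' \<le> \<epsilon>" "e' \<le> \<delta>" using e(1) d(1) e'_def by auto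
    have "isbd v" unfolding isbd_def
    proof (intro conjI exI[of _ e'] allI impI)
      show "-1 < v" "v < 1" using vI vm by auto
      show "0 < e'" by (rule e'p(1))
      fix z assume z: "v - e' < z \<and> z < v"
      have "z \<in> IntI \<and> f z = z + (f v - v)" using d(2)[of z] z e'p by simp
      then have zI: "z \<in> IntI" and fz: "f z = z + (b - v)" using fv by auto
      have "f z \<in> W \<longleftrightarrow> b \<notin> W" using e(2) z e'p fz by simp
      then show "z \<in> W \<longleftrightarrow> v \<notin> W" using inv[OF zI] inv[OF vI] fv by simp
    qed
    then show ?thesis using fv by blast
  qed
  have F4: "\<exists>k. (f^^k) b \<in> P \<and> isbd ((f^^k) b) \<and> (\<forall>i<k. (f^^i) b \<notin> P)" if bd: "isbd b" for b
  proof (cases "\<exists>k. (f^^k) b \<in> P")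
    case False
    have all: "isbd ((f^^k) b)" for k
    proof (induction k)
      case 0 then show ?case using bd by simp
    next
      case (Suc k)
      have "(f^^k) b \<notin> P" using False by blast
      then show ?case using F2[OF Suc.IH] by simp
    qed
    have "inj (\<lambda>k. (f^^k) b)" using orbit_inj[OF bdI[OF bd]] unfolding inj_def by blast
    moreover have "range (\<lambda>k. (f^^k) b) \<subseteq> {b. isbd b}" using all by auto
    ultimately have "finite (UNIV :: nat set)" using finbd by (meson inj_on_finite)
    then show ?thesis by simp
  next
    case True
    define k where "k = (LEAST k. (f^^k) b \<in> P)"
    have kP: "(f^^k) b \<in> P" unfolding k_def using True by (metis LeastI)
    have nk: "\<forall>i<k. (f^^i) b \<notin> P" unfolding k_def using not_less_Least by blast
    have "isbd ((f^^i) b)" if "i \<le> k" for i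
      using that
    proof (induction i)
      case 0 then show ?case using bd by simp
    next
      case (Suc i)
      have "(f^^i) b \<notin> P" using nk Suc.prems by simp
      then show ?case using F2[OF Suc.IH] Suc.prems by simp
    qed
    then show ?thesis using kP nk by blast
  qed
  have F5: "\<exists>m \<alpha>. 1 \<le> m \<and> (f^^m) (p \<alpha>) = b" if bd: "isbd b" for b
  proof (rule ccontr)
    assume nex: "\<not> (\<exists>m \<alpha>. 1 \<le> m \<and> (f^^m) (p \<alpha>) = b)"
    have ex: "\<exists>y. isbd y \<and> (f^^n) y = b" for n
    proof (induction n)
      case 0 then show ?case using bd by (intro exI[of _ b]) simp
    next
      case (Suc n)
      then obtain y where y: "isbd y" "(f^^n) y = b" by blast
      have yP: "y \<notin> f ` P"
      proof
        assume "y \<in> f ` P"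
        then obtain \<alpha> where "y = f (p \<alpha>)" unfolding P_def by auto
        then have "(f^^Suc n) (p \<alpha>) = b" using y(2) by (simp only: funpow_Suc_right o_apply)
        moreover have "1 \<le> Suc n" by simp
        ultimately show False using nex by blast
      qed
      obtain v where v: "isbd v" "f v = y" using F3[OF y(1) yP] by blast
      have "(f^^Suc n) v = b" using v(2) y(2) by (simp only: funpow_Suc_right o_apply)
      then show ?case using v(1) by blast
    qed
    define Y where "Y n = (SOME y. isbd y \<and> (f^^n) y = b)" for n
    have Y: "isbd (Y n) \<and> (f^^n) (Y n) = b" for n unfolding Y_def using someI_ex[OF ex[of n]] .
    have "inj Y"
    proof (rule injI)
      fix i j assume e: "Y i = Y j"
      have "(f^^i) (Y i) = (f^^j) (Y i)" using Y[of i] Y[of j] e by simp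
      then show "i = j" using orbit_inj bdI Y by blast
    qed
    moreover have "range Y \<subseteq> {b. isbd b}" using Y by auto
    ultimately have "finite (UNIV :: nat set)" using finbd by (meson inj_on_finite)
    then show False by simp
  qed
  have F6: "b = 0" if bd: "isbd b" for b
  proof -
    obtain k where k: "(f^^k) b \<in> P" "isbd ((f^^k) b)" "\<forall>i<k. (f^^i) b \<notin> P" using F4[OF bd] by blast
    obtain \<beta> where b: "(f^^k) b = p \<beta>" using k(1) unfolding P_def by blast
    obtain m \<alpha> where m: "1 \<le> m" "(f^^m) (p \<alpha>) = b" using F5[OF bd] by blast
    have "(f^^(k + m)) (p \<alpha>) = p \<beta>" using m(2) b by (simp add: funpow_add)
    then have "p \<beta> = -1 \<or> p \<beta> = 0" using keane[of "k + m"] m(1) by simp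
    moreover have "p \<beta> \<noteq> -1" using k(2) b isbd_def by simp
    ultimately have pb0: "(f^^k) b = 0" using b by simp
    show "b = 0"
    proof (cases k)
      case 0 then show ?thesis using pb0 by simp
    next
      case (Suc k')
      obtain \<alpha>0 where a0: "f (p \<alpha>0) = 0" using e0 by blast
      have "f ((f^^k') b) = 0" using pb0 Suc by simp
      then have "f ((f^^k') b) = f (p \<alpha>0)" using a0 by simp
      then have "(f^^k') b = p \<alpha>0"
        using feq[OF T.G.pow_in[OF bdI[OF bd]] piece_I[OF order_refl pq[of \<alpha>0]]] by simp
      moreover have "(f^^k') b \<notin> P" using k(3) Suc by simp
      ultimately show ?thesis unfolding P_def by simp
    qed
  qed
  have nbW: "\<not> (\<exists>\<epsilon>>0. \<forall>z. b - \<epsilon> < z \<and> z < b \<longrightarrow> (z \<in> W \<longleftrightarrow> b \<notin> W))"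
    if "-1 < b" "b < 1" "b \<noteq> 0" for b
    using F6 that unfolding isbd_def by blast
  have neg: "y1 \<in> W \<longleftrightarrow> y2 \<in> W" if "-1 \<le> y1" "y1 < 0" "-1 \<le> y2" "y2 < 0" for y1 y2
  proof (rule ccontr)
    assume "\<not> (y1 \<in> W \<longleftrightarrow> y2 \<in> W)"
    then consider "y1 \<in> W" "y2 \<notin> W" | "y2 \<in> W" "y1 \<notin> W" by blast
    then show False
    proof cases
      case 1 show False by (rule halves[OF fF WF _ that 1]) (use nbW in auto)
    next
      case 2 show False by (rule halves[OF fF WF _ that(3,4,1,2) 2]) (use nbW in auto)
    qed
  qed
  have pos: "y1 \<in> W \<longleftrightarrow> y2 \<in> W" if "0 \<le> y1" "y1 < 1" "0 \<le> y2" "y2 < 1" for y1 y2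
  proof (rule ccontr)
    assume "\<not> (y1 \<in> W \<longleftrightarrow> y2 \<in> W)"
    then consider "y1 \<in> W" "y2 \<notin> W" | "y2 \<in> W" "y1 \<notin> W" by blast
    then show False
    proof cases
      case 1 show False by (rule halves[OF fF WF _ that 1]) (use nbW in auto)
    next
      case 2 show False by (rule halves[OF fF WF _ that(3,4,1,2) 2]) (use nbW in auto)
    qed
  qed
  have cW: "c \<in> W" unfolding W_def T.W_def using cd by (auto intro: exI[of _ 0])
  have neg1: "y \<in> W \<longleftrightarrow> -1 \<in> W" if "-1 \<le> y" "y < 0" for y using neg[of y "-1"] that by simp
  have pos1: "y \<in> W \<longleftrightarrow> 0 \<in> W" if "0 \<le> y" "y < 1" for y using pos[of y 0] that by simp
  show ?thesis
  proof (rule ccontr)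
    assume nx: "\<not> (\<exists>n. (f^^n) x \<in> {c..<d})"
    then have xW: "x \<notin> W" unfolding W_def T.W_def by blast
    have diff: "(-1 \<in> W) \<noteq> (0 \<in> W)"
    proof -
      have "c \<in> W" by (rule cW)
      moreover have "x \<notin> W" by (rule xW)
      ultimately show ?thesis using neg1[of c] pos1[of c] neg1[of x] pos1[of x] cd x by (cases "c < 0"; cases "x < 0") auto
    qed
    have "f ` {-1..<0} \<subseteq> {-1..<0}"
    proof
      fix w assume "w \<in> f ` {-1..<0}"
      then obtain y where y: "-1 \<le> y" "y < 0" "w = f y" by auto
      have yI: "y \<in> IntI" using y by simp
      have wI: "w \<in> IntI" using into[OF yI] y(3) by simp
      show "w \<in> {-1..<0}"
      proof (rule ccontr)
        assume "w \<notin> {-1..<0}"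
        then have w0: "0 \<le> w" "w < 1" using wI by auto
        have "y \<in> W \<longleftrightarrow> w \<in> W" using inv[OF yI] y(3) by simp
        then show False using neg1[OF y(1,2)] pos1[OF w0] diff by simp
      qed
    qed
    then show False using irr_neg by simp
  qed
qed

end

theorem proposition8p4:
  fixes f :: "real \<Rightarrow> real" and p q :: "'a::finite \<Rightarrow> real"
  assumes "is_iet f p q"
    and "iet_irreducible f p q"
    and "billiard_like f p q"
    and "modified_keane f p"
  shows "minimal_on_I f"
proof -
  interpret S: setting f p q
    by unfold_locales (use assms in auto)
  show ?thesis unfolding minimal_on_I_def
  proof (intro ballI subsetI)
    fix x y assume x: "x \<in> IntI" and y: "y \<in> IntI"
    show "y \<in> closure {(f ^^ n) x |n. True}"
      unfolding closure_approachable
    proof (intro allI impI)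
      fix e :: real assume e: "0 < e"
      have cd: "-1 \<le> y" "y < min (y + e) 1" "min (y + e) 1 \<le> 1" using y e by auto
      obtain n where n: "(f^^n) x \<in> {y..<min (y + e) 1}" using S.enter[OF cd x] by blast
      then have "dist ((f^^n) x) y < e" unfolding dist_real_def by auto
      then show "\<exists>s\<in>{(f ^^ n) x |n. True}. dist s y < e" by blast
    qed
  qed
qed

end
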